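(* Let $k$ be an infinite field, $D$ a division algebra with $k$ contained in its centre, $n\ge 1$, $A=M_n(D)$, and let $B\subseteq A$ be a dense subalgebra containing $k$. Let $m\ge 1$, let $W=M_{n\times m}(D)$, regarded as a left $A$-module via matrix multiplication, and let $V\subseteq W$ be a $B$-submodule with $AV=W$. Write $m=nq+r$ with $0\le r<n$. Then there is an $A$-module automorphism $\sigma$ of $W$ such that $\sigma(V)$ contains the $q$ matrices $$E_1=(I\;0\;\cdots\;0\;0'),\quad E_2=(0\;I\;\cdots\;0\;0'),\ \dots,\ E_q=(0\;0\;\cdots\;I\;0')$$ and a matrix of the form $(Y_1\;Y_2\;\cdots\;Y_q\;Y')$, where $I$ is the $n\times n$ identity matrix, $0$ the $n\times n$ zero matrix, $0'$ the $n\times r$ zero matrix, $Y_1,\dots,Y_q$ are $n\times n$ matrices over $D$, and $Y'$ is an $n\times r$ matrix over $D$ of rank $r$. (If $r=0$ the blocks $0'$, $Y'$ are empty, and then $\sigma(V)$ contains an $A$-basis of $W\cong A^q$.)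
   Context: A subring $B$ of a ring $A$ is called dense in $A$ if every simple left $A$-module $U$ is also simple as a $B$-$\mathrm{End}_A(U)$-bimodule. The $A$-module automorphisms of $W=M_{n\times m}(D)$ are the maps $X\mapsto XT$ with $T\in GL_m(D)$. *)

theory Defs
  imports "Jordan_Normal_Form.Matrix"
begin

text \<open>D is a division ring (type 'a). Matrices over D are JNF matrices; A = M_n(D) is
  carrier_mat n n, and W = M_{n x m}(D) is carrier_mat n m.\<close>

definition central_subfield :: "'a::division_ring set \<Rightarrow> bool" where
  "central_subfield k \<longleftrightarrow>
     0 \<in> k \<and> 1 \<in> k \<and>
     (\<forall>x\<in>k. \<forall>y\<in>k. x + y \<in> k \<and> x * y \<in> k) \<and>
     (\<forall>x\<in>k. - x \<in> k) \<and> (\<forall>x\<in>k. x \<noteq> 0 \<longrightarrow> inverse x \<in> k) \<and>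
     (\<forall>c\<in>k. \<forall>d. c * d = d * c)"

definition k_subalgebra :: "nat \<Rightarrow> 'a::division_ring set \<Rightarrow> 'a mat set \<Rightarrow> bool" where
  "k_subalgebra n k B \<longleftrightarrow>
     B \<subseteq> carrier_mat n n \<and> 1\<^sub>m n \<in> B \<and>
     (\<forall>x\<in>B. \<forall>y\<in>B. x + y \<in> B \<and> x * y \<in> B) \<and> (\<forall>x\<in>B. - x \<in> B) \<and>
     (\<forall>c\<in>k. c \<cdot>\<^sub>m 1\<^sub>m n \<in> B)"

definition left_module ::
  "nat \<Rightarrow> 'u set \<Rightarrow> ('u \<Rightarrow> 'u \<Rightarrow> 'u) \<Rightarrow> 'u \<Rightarrow> ('a::division_ring mat \<Rightarrow> 'u \<Rightarrow> 'u) \<Rightarrow> bool" where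
  "left_module n U pl z0 act \<longleftrightarrow>
     z0 \<in> U \<and>
     (\<forall>x\<in>U. \<forall>y\<in>U. pl x y \<in> U) \<and>
     (\<forall>x\<in>U. \<forall>y\<in>U. \<forall>z\<in>U. pl (pl x y) z = pl x (pl y z)) \<and>
     (\<forall>x\<in>U. \<forall>y\<in>U. pl x y = pl y x) \<and>
     (\<forall>x\<in>U. pl z0 x = x) \<and>
     (\<forall>x\<in>U. \<exists>y\<in>U. pl x y = z0) \<and>
     (\<forall>a\<in>carrier_mat n n. \<forall>x\<in>U. act a x \<in> U) \<and>
     (\<forall>a\<in>carrier_mat n n. \<forall>x\<in>U. \<forall>y\<in>U. act a (pl x y) = pl (act a x) (act a y)) \<and>
     (\<forall>a\<in>carrier_mat n n. \<forall>b\<in>carrier_mat n n. \<forall>x\<in>U. act (a + b) x = pl (act a x) (act b x)) \<and>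
     (\<forall>a\<in>carrier_mat n n. \<forall>b\<in>carrier_mat n n. \<forall>x\<in>U. act (a * b) x = act a (act b x)) \<and>
     (\<forall>x\<in>U. act (1\<^sub>m n) x = x)"

definition simple_module ::
  "nat \<Rightarrow> 'u set \<Rightarrow> ('u \<Rightarrow> 'u \<Rightarrow> 'u) \<Rightarrow> 'u \<Rightarrow> ('a::division_ring mat \<Rightarrow> 'u \<Rightarrow> 'u) \<Rightarrow> bool" where
  "simple_module n U pl z0 act \<longleftrightarrow>
     left_module n U pl z0 act \<and> U \<noteq> {z0} \<and>
     (\<forall>S. S \<subseteq> U \<and> z0 \<in> S \<and> (\<forall>x\<in>S. \<forall>y\<in>S. pl x y \<in> S) \<and>
          (\<forall>a\<in>carrier_mat n n. \<forall>x\<in>S. act a x \<in> S)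
        \<longrightarrow> S = {z0} \<or> S = U)"

definition module_endo ::
  "nat \<Rightarrow> 'u set \<Rightarrow> ('u \<Rightarrow> 'u \<Rightarrow> 'u) \<Rightarrow> ('a::division_ring mat \<Rightarrow> 'u \<Rightarrow> 'u) \<Rightarrow> ('u \<Rightarrow> 'u) \<Rightarrow> bool" where
  "module_endo n U pl act f \<longleftrightarrow>
     f ` U \<subseteq> U \<and> (\<forall>x\<in>U. \<forall>y\<in>U. f (pl x y) = pl (f x) (f y)) \<and>
     (\<forall>a\<in>carrier_mat n n. \<forall>x\<in>U. f (act a x) = act a (f x))"

text \<open>U is simple as a B-End_A(U)-bimodule: its only sub-bimodules
  (additive subgroups stable under B and under End_A(U)) are 0 and U.
  (Stability under additive inverses follows from -1 \<in> B.)\<close>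
definition simple_bimodule ::
  "nat \<Rightarrow> 'a::division_ring mat set \<Rightarrow> 'u set \<Rightarrow> ('u \<Rightarrow> 'u \<Rightarrow> 'u) \<Rightarrow> 'u \<Rightarrow> ('a mat \<Rightarrow> 'u \<Rightarrow> 'u) \<Rightarrow> bool" where
  "simple_bimodule n B U pl z0 act \<longleftrightarrow>
     U \<noteq> {z0} \<and>
     (\<forall>S. S \<subseteq> U \<and> z0 \<in> S \<and> (\<forall>x\<in>S. \<forall>y\<in>S. pl x y \<in> S) \<and>
          (\<forall>b\<in>B. \<forall>x\<in>S. act b x \<in> S) \<and>
          (\<forall>f. module_endo n U pl act f \<longrightarrow> (\<forall>x\<in>S. f x \<in> S))
        \<longrightarrow> S = {z0} \<or> S = U)"

text \<open>Every simple A-module is cyclic, hence isomorphic to A/L for a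
  maximal left ideal L, whose elements (cosets) are sets of matrices; so it suffices
  (and is equivalent) to quantify over modules whose carrier lies in 'a mat set.\<close>
definition dense_in :: "nat \<Rightarrow> 'a::division_ring mat set \<Rightarrow> bool" where
  "dense_in n B \<longleftrightarrow>
     (\<forall>(U :: 'a mat set set) pl z0 act.
        simple_module n U pl z0 act \<longrightarrow> simple_bimodule n B U pl z0 act)"

definition B_submodule :: "nat \<Rightarrow> nat \<Rightarrow> 'a::division_ring mat set \<Rightarrow> 'a mat set \<Rightarrow> bool" where
  "B_submodule n m B V \<longleftrightarrow>
     V \<subseteq> carrier_mat n m \<and> 0\<^sub>m n m \<in> V \<and>
     (\<forall>x\<in>V. \<forall>y\<in>V. x + y \<in> V) \<and> (\<forall>x\<in>V. - x \<in> V) \<and>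
     (\<forall>b\<in>B. \<forall>x\<in>V. b * x \<in> V)"

inductive_set A_span :: "nat \<Rightarrow> nat \<Rightarrow> 'a::division_ring mat set \<Rightarrow> 'a mat set"
  for n m :: nat and V :: "'a mat set" where
  zero: "0\<^sub>m n m \<in> A_span n m V"
| step: "a \<in> carrier_mat n n \<Longrightarrow> v \<in> V \<Longrightarrow> x \<in> A_span n m V \<Longrightarrow> a * v + x \<in> A_span n m V"

definition A_module_aut :: "nat \<Rightarrow> nat \<Rightarrow> ('a::division_ring mat \<Rightarrow> 'a mat) \<Rightarrow> bool" where
  "A_module_aut n m \<sigma> \<longleftrightarrow>
     bij_betw \<sigma> (carrier_mat n m) (carrier_mat n m) \<and>
     (\<forall>X\<in>carrier_mat n m. \<forall>Y\<in>carrier_mat n m. \<sigma> (X + Y) = \<sigma> X + \<sigma> Y) \<and>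
     (\<forall>a\<in>carrier_mat n n. \<forall>X\<in>carrier_mat n m. \<sigma> (a * X) = a * \<sigma> X)"

definition cols_indep :: "'a::division_ring mat \<Rightarrow> nat set \<Rightarrow> bool" where
  "cols_indep M S \<longleftrightarrow>
     (\<forall>c :: nat \<Rightarrow> 'a. (\<forall>i<dim_row M. (\<Sum>j\<in>S. M $$ (i, j) * c j) = 0) \<longrightarrow> (\<forall>j\<in>S. c j = 0))"

definition mat_rank :: "'a::division_ring mat \<Rightarrow> nat" where
  "mat_rank M = Max {card S | S. S \<subseteq> {0..<dim_col M} \<and> cols_indep M S}"

text \<open>E_j (0-based j < q): n x m matrix with the identity in the j-th n x n block.\<close>
definition E_block :: "nat \<Rightarrow> nat \<Rightarrow> nat \<Rightarrow> 'a::division_ring mat" where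
  "E_block n m j = mat n m (\<lambda>(i, c). if c = j * n + i then 1 else 0)"

definition tail_block :: "nat \<Rightarrow> nat \<Rightarrow> 'a::division_ring mat \<Rightarrow> 'a mat" where
  "tail_block q r Y = mat (dim_row Y) r (\<lambda>(i, j). Y $$ (i, q * dim_row Y + j))"

end

theory Submission
  imports Defs
begin

lemma mult_idx:
  assumes "A \<in> carrier_mat a b" "B \<in> carrier_mat b c" "i < a" "j < c"
  shows "(A * B) $$ (i, j) = (\<Sum>l<b. A $$ (i, l) * B $$ (l, j))"
  using assms by (auto simp: scalar_prod_def atLeast0LessThan intro!: sum.cong)

lemma sum_assoc3:
  fixes a :: "'s \<Rightarrow> 'a::semiring_0"
  shows "(\<Sum>j\<in>J. (\<Sum>s\<in>S. a s * X s j) * Y j) = (\<Sum>s\<in>S. a s * (\<Sum>j\<in>J. X s j * Y j))"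
  by (simp add: sum_distrib_left sum_distrib_right mult.assoc) (rule sum.swap)

lemma sum_delta_left:
  fixes f :: "nat \<Rightarrow> 'a::semiring_1"
  assumes "s \<in> S" "finite S"
  shows "(\<Sum>l\<in>S. (if l = s then 1 else 0) * f l) = f s"
    "(\<Sum>l\<in>S. f l * (if l = s then 1 else 0)) = f s"
    "(\<Sum>l\<in>S. (if s = l then 1 else 0) * f l) = f s"
    "(\<Sum>l\<in>S. f l * (if s = l then 1 else 0)) = f s"
proof -
  have a: "(\<Sum>l\<in>S. (if l = s then 1 else 0) * f l) = (\<Sum>l\<in>S. if l = s then f l else 0)"
    "(\<Sum>l\<in>S. f l * (if l = s then 1 else 0)) = (\<Sum>l\<in>S. if l = s then f l else 0)"
    "(\<Sum>l\<in>S. (if s = l then 1 else 0) * f l) = (\<Sum>l\<in>S. if l = s then f l else 0)"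
    "(\<Sum>l\<in>S. f l * (if s = l then 1 else 0)) = (\<Sum>l\<in>S. if l = s then f l else 0)"
    by (auto intro!: sum.cong)
  show "(\<Sum>l\<in>S. (if l = s then 1 else 0) * f l) = f s"
    "(\<Sum>l\<in>S. f l * (if l = s then 1 else 0)) = f s"
    "(\<Sum>l\<in>S. (if s = l then 1 else 0) * f l) = f s"
    "(\<Sum>l\<in>S. f l * (if s = l then 1 else 0)) = f s"
    unfolding a using assms by (simp_all add: sum.delta)
qed

definition inv_mat :: "nat \<Rightarrow> 'a::ring_1 mat \<Rightarrow> bool" where
  "inv_mat p T \<longleftrightarrow> T \<in> carrier_mat p p \<and> (\<exists>T'\<in>carrier_mat p p. T * T' = 1\<^sub>m p \<and> T' * T = 1\<^sub>m p)"

lemma inv_mat_one: "inv_mat p (1\<^sub>m p)"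
  unfolding inv_mat_def by (auto intro!: bexI[of _ "1\<^sub>m p"])

lemma inv_mat_mult:
  assumes "inv_mat p S" "inv_mat p T" shows "inv_mat p (S * T)"
proof -
  obtain S' T' where S: "S \<in> carrier_mat p p" "S' \<in> carrier_mat p p" "S * S' = 1\<^sub>m p" "S' * S = 1\<^sub>m p"
    and T: "T \<in> carrier_mat p p" "T' \<in> carrier_mat p p" "T * T' = 1\<^sub>m p" "T' * T = 1\<^sub>m p"
    using assms unfolding inv_mat_def by blast
  have "(S * T) * (T' * S') = S * (T * (T' * S'))" using S T by (simp add: assoc_mult_mat[of _ p p _ p _ p])
  also have "T * (T' * S') = (T * T') * S'" using S T by (intro assoc_mult_mat[symmetric, of _ p p _ p _ p])
  also have "S * ((T * T') * S') = 1\<^sub>m p" using S T by simp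
  finally have 1: "(S * T) * (T' * S') = 1\<^sub>m p" .
  have "(T' * S') * (S * T) = T' * (S' * (S * T))" using S T by (simp add: assoc_mult_mat[of _ p p _ p _ p])
  also have "S' * (S * T) = (S' * S) * T" using S T by (intro assoc_mult_mat[symmetric, of _ p p _ p _ p])
  also have "T' * ((S' * S) * T) = 1\<^sub>m p" using S T by simp
  finally have 2: "(T' * S') * (S * T) = 1\<^sub>m p" .
  show ?thesis unfolding inv_mat_def using S T 1 2 by (auto simp del: assoc_mult_mat intro!: bexI[of _ "T' * S'"])
qed

definition rows_indep :: "'a::division_ring mat \<Rightarrow> (nat \<Rightarrow> nat) \<Rightarrow> nat \<Rightarrow> bool" where
  "rows_indep M P k \<longleftrightarrow>
     (\<forall>\<alpha>. (\<forall>t<dim_col M. (\<Sum>s<k. \<alpha> s * M $$ (P s, t)) = 0) \<longrightarrow> (\<forall>s<k. \<alpha> s = 0))"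

lemma vm_zero_inv:
  fixes \<beta> :: "nat \<Rightarrow> 'a::ring_1"
  assumes "T \<in> carrier_mat p p" "T' \<in> carrier_mat p p" "T * T' = 1\<^sub>m p"
    and "\<forall>t<p. (\<Sum>l<p. \<beta> l * T $$ (l, t)) = 0" and "j < p"
  shows "\<beta> j = 0"
proof -
  have "\<beta> j = (\<Sum>l<p. \<beta> l * (T * T') $$ (l, j))"
    using assms by (simp add: sum_delta_left)
  also have "\<dots> = (\<Sum>l<p. \<beta> l * (\<Sum>t<p. T $$ (l, t) * T' $$ (t, j)))"
    using assms by (intro sum.cong refl, subst mult_idx[of _ p p _ p], auto)
  also have "\<dots> = (\<Sum>t<p. (\<Sum>l<p. \<beta> l * T $$ (l, t)) * T' $$ (t, j))"
    by (rule sum_assoc3[symmetric])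
  also have "\<dots> = 0" using assms by simp
  finally show ?thesis .
qed

lemma rows_sum_mult:
  assumes "M \<in> carrier_mat n p" "T \<in> carrier_mat p p'" "\<forall>s<k. P s < n" "t < p'"
  shows "(\<Sum>s<k. \<alpha> s * (M * T) $$ (P s, t)) = (\<Sum>l<p. (\<Sum>s<k. \<alpha> s * M $$ (P s, l)) * T $$ (l, t))"
proof -
  have "(\<Sum>s<k. \<alpha> s * (M * T) $$ (P s, t)) = (\<Sum>s<k. \<alpha> s * (\<Sum>l<p. M $$ (P s, l) * T $$ (l, t)))"
    using assms by (intro sum.cong refl, subst mult_idx[of _ n p _ p'], auto)
  also have "\<dots> = (\<Sum>l<p. (\<Sum>s<k. \<alpha> s * M $$ (P s, l)) * T $$ (l, t))"
    by (rule sum_assoc3[symmetric])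
  finally show ?thesis .
qed

lemma rows_indep_mult_inv:
  assumes "M \<in> carrier_mat n p" "inv_mat p T" "\<forall>s<k. P s < n" "rows_indep M P k"
  shows "rows_indep (M * T) P k"
proof -
  obtain T' where T: "T \<in> carrier_mat p p" "T' \<in> carrier_mat p p" "T * T' = 1\<^sub>m p"
    using assms unfolding inv_mat_def by blast
  show ?thesis unfolding rows_indep_def
  proof (rule allI, rule impI)
    fix \<alpha> assume h: "\<forall>t<dim_col (M * T). (\<Sum>s<k. \<alpha> s * (M * T) $$ (P s, t)) = 0"
    have hh: "\<forall>t<p. (\<Sum>l<p. (\<Sum>s<k. \<alpha> s * M $$ (P s, l)) * T $$ (l, t)) = 0"
      using h T assms rows_sum_mult[OF assms(1) T(1) assms(3)] by auto
    have "\<forall>j<p. (\<Sum>s<k. \<alpha> s * M $$ (P s, j)) = 0"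
      by (intro allI impI vm_zero_inv[OF T hh])
    thus "\<forall>s<k. \<alpha> s = 0" using assms(1,4) unfolding rows_indep_def by auto
  qed
qed

lemma rows_indep_mult_rev:
  assumes "M \<in> carrier_mat n p" "T \<in> carrier_mat p p'" "\<forall>s<k. P s < n" "rows_indep (M * T) P k"
  shows "rows_indep M P k"
  unfolding rows_indep_def
proof (rule allI, rule impI)
  fix \<alpha> assume h: "\<forall>t<dim_col M. (\<Sum>s<k. \<alpha> s * M $$ (P s, t)) = 0"
  have "\<forall>t<p'. (\<Sum>s<k. \<alpha> s * (M * T) $$ (P s, t)) = 0"
    using h assms rows_sum_mult[OF assms(1,2,3)] by auto
  thus "\<forall>s<k. \<alpha> s = 0" using assms unfolding rows_indep_def by auto
qed

lemma rows_indep_Suc: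
  assumes "rows_indep M P (Suc k)" shows "rows_indep M P k"
  unfolding rows_indep_def
proof (rule allI, rule impI)
  fix \<alpha> :: "nat \<Rightarrow> 'a" assume h: "\<forall>t<dim_col M. (\<Sum>s<k. \<alpha> s * M $$ (P s, t)) = 0"
  let ?\<alpha> = "\<alpha>(k := 0)"
  have "\<forall>t<dim_col M. (\<Sum>s<Suc k. ?\<alpha> s * M $$ (P s, t)) = 0"
    using h by (simp add: sum.lessThan_Suc)
  hence "\<forall>s<Suc k. ?\<alpha> s = 0" using assms unfolding rows_indep_def by blast
  thus "\<forall>s<k. \<alpha> s = 0" by (metis less_SucI nat_neq_iff fun_upd_other)
qed

definition rowrep :: "nat \<Rightarrow> nat \<Rightarrow> (nat \<Rightarrow> 'a::ring_1) \<Rightarrow> 'a mat" where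
  "rowrep p h a = mat p p (\<lambda>(j, t). if j = h then a t else if j = t then 1 else 0)"

lemma rowrep_carrier[simp]: "rowrep p h a \<in> carrier_mat p p"
  unfolding rowrep_def by simp

lemma rowrep_mult:
  fixes X :: "'a::ring_1 mat"
  assumes "X \<in> carrier_mat r p" "h < p" "i < r" "t < p"
  shows "(X * rowrep p h a) $$ (i, t) = (if t = h then 0 else X $$ (i, t)) + X $$ (i, h) * a t"
proof -
  have "(X * rowrep p h a) $$ (i, t) = (\<Sum>l<p. X $$ (i, l) * (if l = h then a t else if l = t then 1 else 0))"
    using assms by (subst mult_idx[of _ r p _ p], auto simp: rowrep_def intro!: sum.cong)
  also have "\<dots> = X $$ (i, h) * a t + (\<Sum>l\<in>{..<p} - {h}. X $$ (i, l) * (if l = t then 1 else 0))"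
    using assms by (subst sum.remove[of _ h], auto intro!: sum.cong)
  also have "(\<Sum>l\<in>{..<p} - {h}. X $$ (i, l) * (if l = t then 1 else 0)) = (if t = h then 0 else X $$ (i, t))"
    using assms by (simp add: if_distrib cong: if_cong)
  finally show ?thesis by (simp add: add.commute)
qed

lemma rowrep_inv:
  fixes a :: "nat \<Rightarrow> 'a::division_ring"
  assumes "h < p" "a h \<noteq> 0"
  shows "inv_mat p (rowrep p h a)"
proof -
  define b where "b t = (if t = h then inverse (a h) else - (inverse (a h) * a t))" for t
  have 1: "rowrep p h a * rowrep p h b = 1\<^sub>m p"
    by (rule eq_matI, subst rowrep_mult[of _ p], insert assms,
        auto simp: rowrep_def b_def mult.assoc[symmetric])
  have 2: "rowrep p h b * rowrep p h a = 1\<^sub>m p"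
    by (rule eq_matI, subst rowrep_mult[of _ p], insert assms,
        auto simp: rowrep_def b_def mult.assoc)
  show ?thesis unfolding inv_mat_def using 1 2 by (auto intro!: bexI[of _ "rowrep p h b"])
qed

lemma elim_rows:
  fixes M :: "'a::division_ring mat"
  assumes M: "M \<in> carrier_mat n p" and "\<forall>s<k. P s < n" "rows_indep M P k"
  shows "\<exists>T. inv_mat p T \<and> (\<forall>s<k. \<forall>t<p. (M * T) $$ (P s, t) = (if t = s then 1 else 0))"
  using assms(2,3)
proof (induction k)
  case 0
  show ?case using inv_mat_one by blast
next
  case (Suc k)
  obtain T1 where T1: "inv_mat p T1" and piv1: "\<forall>s<k. \<forall>t<p. (M * T1) $$ (P s, t) = (if t = s then 1 else 0)"
    using Suc rows_indep_Suc by (metis less_SucI)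
  define M1 where "M1 = M * T1"
  have T1c: "T1 \<in> carrier_mat p p" using T1 unfolding inv_mat_def by auto
  have M1c: "M1 \<in> carrier_mat n p" using M T1c M1_def by auto
  have ind1: "rows_indep M1 P (Suc k)" unfolding M1_def
    by (rule rows_indep_mult_inv[OF M T1]) (use Suc in auto)
  have Pk: "P k < n" using Suc by auto
  have piv1': "\<forall>s<k. \<forall>t<p. M1 $$ (P s, t) = (if t = s then 1 else 0)" using piv1 M1_def by auto
  have "\<exists>t0. k \<le> t0 \<and> t0 < p \<and> M1 $$ (P k, t0) \<noteq> 0"
  proof (rule ccontr)
    assume nex: "\<not> ?thesis"
    define \<alpha> where "\<alpha> s = (if s = k then 1 else - M1 $$ (P k, s))" for s
    have "\<forall>t<dim_col M1. (\<Sum>s<Suc k. \<alpha> s * M1 $$ (P s, t)) = 0"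
    proof (intro allI impI)
      fix t assume t: "t < dim_col M1"
      have "(\<Sum>s<k. \<alpha> s * M1 $$ (P s, t)) = (\<Sum>s<k. if s = t then - M1 $$ (P k, s) else 0)"
        using t M1c piv1' by (intro sum.cong refl) (auto simp: \<alpha>_def)
      also have "\<dots> = (if t < k then - M1 $$ (P k, t) else 0)" by (simp add: sum.delta')
      finally show "(\<Sum>s<Suc k. \<alpha> s * M1 $$ (P s, t)) = 0"
        using nex t M1c by (auto simp: \<alpha>_def)
    qed
    hence "\<alpha> k = 0" using ind1 unfolding rows_indep_def by blast
    thus False by (simp add: \<alpha>_def)
  qed
  then obtain t0 where t0: "k \<le> t0" "t0 < p" "M1 $$ (P k, t0) \<noteq> 0" by blast
  have kp: "k < p" using t0 by auto
  have "\<exists>T2. inv_mat p T2 \<and> (\<forall>s<k. \<forall>t<p. (M1 * T2) $$ (P s, t) = (if t = s then 1 else 0))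
          \<and> (M1 * T2) $$ (P k, k) \<noteq> 0"
  proof (cases "M1 $$ (P k, k) = 0")
    case False
    then show ?thesis using piv1' M1c Pk kp by (intro exI[of _ "1\<^sub>m p"]) (auto simp: inv_mat_one)
  next
    case True
    hence tk: "t0 \<noteq> k" using t0 by auto
    define a where "a t = (if t = t0 \<or> t = k then (1::'a) else 0)" for t
    have inv: "inv_mat p (rowrep p t0 a)" by (rule rowrep_inv) (use t0 in \<open>auto simp: a_def\<close>)
    show ?thesis
    proof (intro exI[of _ "rowrep p t0 a"] conjI inv allI impI)
      fix s t assume s: "s < k" and t: "t < p"
      show "(M1 * rowrep p t0 a) $$ (P s, t) = (if t = s then 1 else 0)"
        using s t t0 piv1' Suc.prems by (subst rowrep_mult[OF M1c]) (auto simp: a_def)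
    next
      show "(M1 * rowrep p t0 a) $$ (P k, k) \<noteq> 0"
        using t0 tk True Pk kp by (subst rowrep_mult[OF M1c]) (auto simp: a_def)
    qed
  qed
  then obtain T2 where T2: "inv_mat p T2" and piv2: "\<forall>s<k. \<forall>t<p. (M1 * T2) $$ (P s, t) = (if t = s then 1 else 0)"
    and nz: "(M1 * T2) $$ (P k, k) \<noteq> 0" by blast
  define M2 where "M2 = M1 * T2"
  have T2c: "T2 \<in> carrier_mat p p" using T2 unfolding inv_mat_def by auto
  have M2c: "M2 \<in> carrier_mat n p" using M1c T2c M2_def by auto
  define r where "r = M2 $$ (P k, k)"
  have r0: "r \<noteq> 0" using nz r_def M2_def by auto
  define b where "b t = (if t = k then inverse r else - (inverse r * M2 $$ (P k, t)))" for t
  have inv3: "inv_mat p (rowrep p k b)" by (rule rowrep_inv) (use kp r0 in \<open>auto simp: b_def\<close>)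
  have fin: "\<forall>s<Suc k. \<forall>t<p. (M2 * rowrep p k b) $$ (P s, t) = (if t = s then 1 else 0)"
  proof (intro allI impI)
    fix s t assume s: "s < Suc k" and t: "t < p"
    show "(M2 * rowrep p k b) $$ (P s, t) = (if t = s then 1 else 0)"
    proof (cases "s = k")
      case True
      then show ?thesis using t kp r0 Pk
        by (subst rowrep_mult[OF M2c]) (auto simp: b_def r_def[symmetric] mult.assoc[symmetric])
    next
      case False
      then show ?thesis using s t kp piv2 Suc.prems M2_def
        by (subst rowrep_mult[OF M2c]) (auto simp: b_def)
    qed
  qed
  have eq: "M * (T1 * T2 * rowrep p k b) = M2 * rowrep p k b"
  proof -
    have c12: "T1 * T2 \<in> carrier_mat p p" using T1c T2c by auto
    have "M * (T1 * T2 * rowrep p k b) = M * (T1 * T2) * rowrep p k b"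
      using M c12 by (intro assoc_mult_mat[symmetric, of _ n p _ p _ p]) auto
    also have "M * (T1 * T2) = M * T1 * T2" using M T1c T2c by (intro assoc_mult_mat[symmetric]) auto
    finally show ?thesis unfolding M2_def M1_def .
  qed
  show ?case
    by (intro exI[of _ "T1 * T2 * rowrep p k b"] conjI inv_mat_mult T1 T2 inv3)
       (use fin eq in simp)
qed

lemma dim_bound:
  fixes f :: "'i \<Rightarrow> nat \<Rightarrow> 'a::division_ring"
  assumes "finite I" "\<forall>\<alpha>. (\<forall>j<d. (\<Sum>i\<in>I. \<alpha> i * f i j) = 0) \<longrightarrow> (\<forall>i\<in>I. \<alpha> i = 0)"
  shows "card I \<le> d"
  using assms
proof (induction d arbitrary: I f)
  case 0
  have "\<forall>i\<in>I. (1::'a) = 0" using "0.prems"(2)[rule_format, of "\<lambda>_. 1"] by auto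
  hence "I = {}" by auto
  thus ?case by simp
next
  case (Suc d)
  show ?case
  proof (cases "\<forall>i\<in>I. f i d = 0")
    case True
    have "\<forall>\<alpha>. (\<forall>j<d. (\<Sum>i\<in>I. \<alpha> i * f i j) = 0) \<longrightarrow> (\<forall>i\<in>I. \<alpha> i = 0)"
    proof (rule allI, rule impI)
      fix \<alpha> :: "'i \<Rightarrow> 'a" assume h: "\<forall>j<d. (\<Sum>i\<in>I. \<alpha> i * f i j) = 0"
      have "\<forall>j<Suc d. (\<Sum>i\<in>I. \<alpha> i * f i j) = 0"
        using h True by (auto simp: less_Suc_eq)
      thus "\<forall>i\<in>I. \<alpha> i = 0" using Suc.prems(2) by blast
    qed
    hence "card I \<le> d" using Suc.IH Suc.prems(1) by blast
    thus ?thesis by simp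
  next
    case False
    then obtain i0 where i0: "i0 \<in> I" "f i0 d \<noteq> 0" by blast
    define I' where "I' = I - {i0}"
    define g where "g i j = f i j - f i d * inverse (f i0 d) * f i0 j" for i j
    have finI': "finite I'" using Suc.prems(1) I'_def by auto
    have "\<forall>\<alpha>. (\<forall>j<d. (\<Sum>i\<in>I'. \<alpha> i * g i j) = 0) \<longrightarrow> (\<forall>i\<in>I'. \<alpha> i = 0)"
    proof (rule allI, rule impI)
      fix \<alpha> :: "'i \<Rightarrow> 'a" assume h: "\<forall>j<d. (\<Sum>i\<in>I'. \<alpha> i * g i j) = 0"
      define c where "c = (\<Sum>i\<in>I'. \<alpha> i * f i d) * inverse (f i0 d)"
      define \<alpha>' where "\<alpha>' i = (if i = i0 then - c else \<alpha> i)" for i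
      have key: "(\<Sum>i\<in>I. \<alpha>' i * f i j) = (\<Sum>i\<in>I'. \<alpha> i * g i j)" for j
      proof -
        have e0: "(\<Sum>i\<in>I. \<alpha>' i * f i j) = \<alpha>' i0 * f i0 j + (\<Sum>i\<in>I'. \<alpha>' i * f i j)"
          unfolding I'_def using Suc.prems(1) i0 by (simp add: sum.remove)
        have e1: "(\<Sum>i\<in>I'. \<alpha>' i * f i j) = (\<Sum>i\<in>I'. \<alpha> i * f i j)"
          unfolding I'_def \<alpha>'_def by (intro sum.cong) auto
        have e2: "(\<Sum>i\<in>I'. \<alpha> i * g i j) = (\<Sum>i\<in>I'. \<alpha> i * f i j) - c * f i0 j"
          unfolding g_def c_def
          by (simp add: right_diff_distrib sum_subtractf sum_distrib_right mult.assoc)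
        have e3: "\<alpha>' i0 = - c" by (simp add: \<alpha>'_def)
        show ?thesis unfolding e0 e1 e2 e3 by (simp add: algebra_simps)
      qed
      have gd: "g i d = 0" for i using i0 unfolding g_def by (simp add: mult.assoc)
      have "\<forall>j<Suc d. (\<Sum>i\<in>I. \<alpha>' i * f i j) = 0"
        using h key gd by (auto simp: less_Suc_eq)
      hence z: "\<forall>i\<in>I. \<alpha>' i = 0" using Suc.prems(2) by blast
      show "\<forall>i\<in>I'. \<alpha> i = 0"
      proof
        fix i assume "i \<in> I'"
        then have "i \<in> I" "i \<noteq> i0" by (auto simp: I'_def)
        thus "\<alpha> i = 0" using z by (auto simp: \<alpha>'_def)
      qed
    qed
    hence "card I' \<le> d" using Suc.IH finI' by blast
    moreover have "card I = Suc (card I')" unfolding I'_def using i0 Suc.prems(1)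
      by (metis card_Suc_Diff1)
    ultimately show ?thesis by simp
  qed
qed

lemma eigen_indep:
  fixes \<beta> :: "'a \<Rightarrow> nat \<Rightarrow> 'a::division_ring" and K :: "nat \<Rightarrow> nat \<Rightarrow> 'a"
  assumes "finite L" "\<forall>e\<in>L. \<forall>x. e * x = x * e"
    and "\<forall>e\<in>L. \<forall>j<d. (\<Sum>l<d. \<beta> e l * K l j) = e * \<beta> e j"
    and "\<forall>e\<in>L. \<exists>j<d. \<beta> e j \<noteq> 0"
  shows "\<forall>\<alpha>. (\<forall>j<d. (\<Sum>e\<in>L. \<alpha> e * \<beta> e j) = 0) \<longrightarrow> (\<forall>e\<in>L. \<alpha> e = 0)"
  using assms
proof (induction L rule: finite_induct)
  case empty
  then show ?case by simp
next
  case (insert \<mu> L)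
  show ?case
  proof (rule allI, rule impI)
    fix \<alpha> assume h: "\<forall>j<d. (\<Sum>e\<in>insert \<mu> L. \<alpha> e * \<beta> e j) = 0"
    have B: "(\<Sum>e\<in>insert \<mu> L. \<alpha> e * (e * \<beta> e j)) = 0" if j: "j < d" for j
    proof -
      have "(\<Sum>e\<in>insert \<mu> L. \<alpha> e * (e * \<beta> e j))
           = (\<Sum>e\<in>insert \<mu> L. \<alpha> e * (\<Sum>l<d. \<beta> e l * K l j))"
        using insert.prems(2) j by (intro sum.cong refl) auto
      also have "\<dots> = (\<Sum>l<d. (\<Sum>e\<in>insert \<mu> L. \<alpha> e * \<beta> e l) * K l j)"
        by (rule sum_assoc3[symmetric])
      also have "\<dots> = 0" using h by simp
      finally show ?thesis .
    qed
    have C: "(\<Sum>e\<in>L. (\<alpha> e * (e - \<mu>)) * \<beta> e j) = 0" if j: "j < d" for j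
    proof -
      have cm: "\<forall>x. \<mu> * x = x * \<mu>" using insert.prems(1) by auto
      have "\<mu> * (\<Sum>e\<in>insert \<mu> L. \<alpha> e * \<beta> e j) = (\<Sum>e\<in>insert \<mu> L. \<mu> * (\<alpha> e * \<beta> e j))"
        by (simp add: sum_distrib_left)
      also have "\<dots> = (\<Sum>e\<in>insert \<mu> L. \<alpha> e * (\<mu> * \<beta> e j))"
        by (intro sum.cong refl) (metis cm mult.assoc)
      finally have z: "(\<Sum>e\<in>insert \<mu> L. \<alpha> e * (\<mu> * \<beta> e j)) = 0" using h j by simp
      have "(\<Sum>e\<in>insert \<mu> L. \<alpha> e * (e * \<beta> e j)) - (\<Sum>e\<in>insert \<mu> L. \<alpha> e * (\<mu> * \<beta> e j))
          = (\<Sum>e\<in>insert \<mu> L. (\<alpha> e * (e - \<mu>)) * \<beta> e j)"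
        by (simp add: sum_subtractf[symmetric] algebra_simps)
      also have "\<dots> = (\<Sum>e\<in>L. (\<alpha> e * (e - \<mu>)) * \<beta> e j)"
        using insert.hyps by simp
      finally show ?thesis using B[OF j] z by simp
    qed
    have "\<forall>e\<in>L. \<alpha> e * (e - \<mu>) = 0"
    proof -
      have p1: "\<forall>e\<in>L. \<forall>x. e * x = x * e" "\<forall>e\<in>L. \<forall>j<d. (\<Sum>l<d. \<beta> e l * K l j) = e * \<beta> e j"
        "\<forall>e\<in>L. \<exists>j<d. \<beta> e j \<noteq> 0" using insert.prems by auto
      have "\<forall>j<d. (\<Sum>e\<in>L. (\<alpha> e * (e - \<mu>)) * \<beta> e j) = 0" using C by auto
      thus ?thesis using insert.IH[OF p1, THEN spec, of "\<lambda>ee. \<alpha> ee * (ee - \<mu>)"] by simp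
    qed
    hence L0: "\<forall>e\<in>L. \<alpha> e = 0" using insert.hyps by auto
    have "\<forall>j<d. \<alpha> \<mu> * \<beta> \<mu> j = 0" using h L0 insert.hyps by simp
    moreover obtain j where "j < d" "\<beta> \<mu> j \<noteq> 0" using insert.prems(3) by auto
    ultimately have "\<alpha> \<mu> = 0" by auto
    thus "\<forall>e\<in>insert \<mu> L. \<alpha> e = 0" using L0 by auto
  qed
qed

lemma sum_if_mult:
  fixes f :: "nat \<Rightarrow> 'a::semiring_0"
  assumes "finite S"
  shows "(\<Sum>l\<in>S. (if l = i then c else 0) * f l) = (if i \<in> S then c * f i else 0)"
proof -
  have "(\<Sum>l\<in>S. (if l = i then c else 0) * f l) = (\<Sum>l\<in>S. if l = i then c * f i else 0)"
    by (rule sum.cong) auto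
  thus ?thesis using assms by (simp add: sum.delta')
qed

lemma unit_col_mult:
  fixes t v :: "'a::division_ring mat"
  assumes t: "t \<in> carrier_mat n 1" and v: "v \<in> carrier_mat n 1" and i: "i < n" "v $$ (i, 0) \<noteq> 0"
  shows "mat n n (\<lambda>(r, j). if j = i then t $$ (r, 0) * inverse (v $$ (i, 0)) else 0) * v = t"
proof (rule eq_matI)
  fix r j assume r: "r < dim_row t" and j: "j < dim_col t"
  hence j0: "j = 0" using t by auto
  have "(mat n n (\<lambda>(r, j). if j = i then t $$ (r, 0) * inverse (v $$ (i, 0)) else 0) * v) $$ (r, j)
     = (\<Sum>l<n. (if l = i then t $$ (r, 0) * inverse (v $$ (i, 0)) else 0) * v $$ (l, 0))"
    using r t v j0 by (subst mult_idx[of _ n n _ 1]) (auto intro!: sum.cong)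
  also have "\<dots> = t $$ (r, 0) * inverse (v $$ (i, 0)) * v $$ (i, 0)"
    using i by (simp add: sum_if_mult)
  also have "\<dots> = t $$ (r, j)" using i j0 by (simp add: mult.assoc)
  finally show "(mat n n (\<lambda>(r, j). if j = i then t $$ (r, 0) * inverse (v $$ (i, 0)) else 0) * v) $$ (r, j) = t $$ (r, j)" .
qed (use t v in auto)

lemma density_vec:
  fixes B :: "'a::division_ring mat set" and Z :: "'a mat \<Rightarrow> bool"
  assumes dense: "dense_in n B" and sub: "k_subalgebra n k B" and n: "n \<ge> 1"
    and Z0: "Z (0\<^sub>m n 1)"
    and Zadd: "\<forall>x\<in>carrier_mat n 1. \<forall>y\<in>carrier_mat n 1. Z x \<longrightarrow> Z y \<longrightarrow> Z (x + y)"
    and Zsc: "\<forall>x\<in>carrier_mat n 1. \<forall>d. Z x \<longrightarrow> Z (x * mat 1 1 (\<lambda>_. d))"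
    and e: "e \<in> carrier_mat n 1" "\<not> Z e"
    and u: "u \<in> carrier_mat n 1" "u \<noteq> 0\<^sub>m n 1"
  shows "\<exists>b\<in>B. \<not> Z (b * u)"
proof (rule ccontr)
  assume "\<not> ?thesis"
  hence allb: "\<forall>b\<in>B. Z (b * u)" by auto
  have Bc: "\<And>b. b \<in> B \<Longrightarrow> b \<in> carrier_mat n n" using sub unfolding k_subalgebra_def by auto
  have Bmul: "\<And>b b'. b \<in> B \<Longrightarrow> b' \<in> B \<Longrightarrow> b * b' \<in> B" using sub unfolding k_subalgebra_def by auto
  have B1: "1\<^sub>m n \<in> B" using sub unfolding k_subalgebra_def by auto
  define U :: "'a mat set set" where "U = (\<lambda>z. {z}) ` carrier_mat n 1"
  define pl :: "'a mat set \<Rightarrow> 'a mat set \<Rightarrow> 'a mat set" where "pl X Y = {x + y | x y. x \<in> X \<and> y \<in> Y}" for X Y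
  define z0 :: "'a mat set" where "z0 = {0\<^sub>m n 1}"
  define act :: "'a mat \<Rightarrow> 'a mat set \<Rightarrow> 'a mat set" where "act a X = (\<lambda>x. a * x) ` X" for a X
  have pl1: "pl {x} {y} = {x + y}" for x y by (auto simp: pl_def)
  have act1: "act a {x} = {a * x}" for a x by (simp add: act_def)
  have U_iff: "X \<in> U \<longleftrightarrow> (\<exists>z\<in>carrier_mat n 1. X = {z})" for X unfolding U_def by auto
  have allU: "(\<forall>X\<in>U. P X) \<longleftrightarrow> (\<forall>z\<in>carrier_mat n 1. P {z})" for P unfolding U_def by auto
  have lm: "left_module n U pl z0 act"
    unfolding left_module_def allU
  proof (intro conjI ballI)
    show "z0 \<in> U" unfolding z0_def U_iff by auto
    fix x :: "'a mat" assume x: "x \<in> carrier_mat n 1"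
    show "pl z0 {x} = {x}" using x by (simp add: z0_def pl1)
    show "\<exists>y\<in>U. pl {x} y = z0" unfolding z0_def U_iff using x
      by (intro bexI[of _ "{- x}"]) (auto simp: pl1 U_iff intro!: eq_matI)
    show "act (1\<^sub>m n) {x} = {x}" using x by (simp add: act1)
    fix y :: "'a mat" assume y: "y \<in> carrier_mat n 1"
    show "pl {x} {y} \<in> U" using x y by (auto simp: pl1 U_iff)
    show "pl {x} {y} = pl {y} {x}" using x y by (simp add: pl1 comm_add_mat)
    fix z :: "'a mat" assume z: "z \<in> carrier_mat n 1"
    show "pl (pl {x} {y}) {z} = pl {x} (pl {y} {z})" using x y z by (simp add: pl1)
  next
    fix a x :: "'a mat" assume a: "a \<in> carrier_mat n n" and x: "x \<in> carrier_mat n 1"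
    show "act a {x} \<in> U" using a x by (auto simp: act1 U_iff)
    fix y :: "'a mat" assume y: "y \<in> carrier_mat n 1"
    show "act a (pl {x} {y}) = pl (act a {x}) (act a {y})"
      using a x y by (simp add: act1 pl1 mult_add_distrib_mat)
  next
    fix a b x :: "'a mat" assume a: "a \<in> carrier_mat n n" and b: "b \<in> carrier_mat n n" and x: "x \<in> carrier_mat n 1"
    show "act (a + b) {x} = pl (act a {x}) (act b {x})"
      using a b x by (simp add: act1 pl1 add_mult_distrib_mat)
    show "act (a * b) {x} = act a (act b {x})"
      using a b x by (simp add: act1)
  qed
  have e0: "e \<noteq> 0\<^sub>m n 1" using e Z0 by auto
  have sm: "simple_module n U pl z0 act"
    unfolding simple_module_def
  proof (intro conjI lm allI impI)
    have eU: "{e} \<in> U" using e U_iff by blast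
    show "U \<noteq> {z0}"
    proof
      assume "U = {z0}"
      hence "{e} = {0\<^sub>m n 1}" using eU unfolding z0_def by blast
      thus False using e0 by blast
    qed
  next
    fix S assume S: "S \<subseteq> U \<and> z0 \<in> S \<and> (\<forall>x\<in>S. \<forall>y\<in>S. pl x y \<in> S) \<and> (\<forall>a\<in>carrier_mat n n. \<forall>x\<in>S. act a x \<in> S)"
    from S have S1: "S \<subseteq> U" and S4: "\<forall>a\<in>carrier_mat n n. \<forall>x\<in>S. act a x \<in> S" by blast+
    show "S = {z0} \<or> S = U"
    proof (cases "S = {z0}")
      case True
      then show ?thesis by blast
    next
      case False
      have "S \<noteq> {z0}" using False .
      moreover have "z0 \<in> S" using S by blast
      ultimately obtain X where X: "X \<in> S" "X \<noteq> z0" by blast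
      then obtain v where v: "v \<in> carrier_mat n 1" "X = {v}" using S1 U_iff by blast
      have "v \<noteq> 0\<^sub>m n 1" using X v unfolding z0_def by blast
      moreover have "v = 0\<^sub>m n 1" if "\<forall>i<n. v $$ (i, 0) = 0"
        using that v by (intro eq_matI) auto
      ultimately obtain i where i: "i < n" "v $$ (i, 0) \<noteq> 0" by blast
      have "S = U"
      proof
        show "S \<subseteq> U" by (rule S1)
        show "U \<subseteq> S"
        proof
          fix Y assume "Y \<in> U"
          then obtain t where t: "t \<in> carrier_mat n 1" "Y = {t}" using U_iff by blast
          let ?a = "mat n n (\<lambda>(r, j). if j = i then t $$ (r, 0) * inverse (v $$ (i, 0)) else 0)"
          have "act ?a {v} = {t}" using unit_col_mult[OF t(1) v(1) i] by (simp add: act1)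
          moreover have "act ?a {v} \<in> S"
          proof -
            have "?a \<in> carrier_mat n n" by simp
            thus ?thesis using S4 X v by blast
          qed
          ultimately show "Y \<in> S" using t by simp
        qed
      qed
      thus ?thesis by blast
    qed
  qed
  have sb: "simple_bimodule n B U pl z0 act"
  proof -
    have H: "\<forall>(U :: 'a mat set set) pl z0 act. simple_module n U pl z0 act \<longrightarrow> simple_bimodule n B U pl z0 act"
      using dense unfolding dense_in_def by simp
    show ?thesis by (rule H[rule_format, OF sm])
  qed
  define S where "S = (\<lambda>z. {z}) ` {z \<in> carrier_mat n 1. \<forall>b\<in>B. Z (b * z)}"
  have S_iff: "X \<in> S \<longleftrightarrow> (\<exists>z\<in>carrier_mat n 1. (\<forall>b\<in>B. Z (b * z)) \<and> X = {z})" for X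
    unfolding S_def by auto
  have "S = {z0} \<or> S = U"
  proof -
    have c1: "S \<subseteq> U" unfolding S_def U_def by auto
    have c2: "z0 \<in> S"
    proof -
      have "\<forall>b\<in>B. b * 0\<^sub>m n 1 = 0\<^sub>m n 1" using Bc right_mult_zero_mat by blast
      thus ?thesis unfolding S_iff z0_def using Z0 by (intro bexI[of _ "0\<^sub>m n 1"]) auto
    qed
    have c3: "\<forall>x\<in>S. \<forall>y\<in>S. pl x y \<in> S"
    proof (intro ballI)
      fix X Y assume "X \<in> S" "Y \<in> S"
      then obtain x y where xy: "x \<in> carrier_mat n 1" "y \<in> carrier_mat n 1" "\<forall>b\<in>B. Z (b * x)"
        "\<forall>b\<in>B. Z (b * y)" "X = {x}" "Y = {y}" unfolding S_iff by blast
      have "\<forall>b\<in>B. Z (b * (x + y))"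
      proof
        fix b assume b: "b \<in> B"
        hence bc: "b \<in> carrier_mat n n" by (rule Bc)
        have "b * (x + y) = b * x + b * y" using bc xy by (simp add: mult_add_distrib_mat)
        moreover have "b * x \<in> carrier_mat n 1" "b * y \<in> carrier_mat n 1" using bc xy by auto
        ultimately show "Z (b * (x + y))" using Zadd xy b by auto
      qed
      thus "pl X Y \<in> S" unfolding S_iff using xy by (auto simp: pl1)
    qed
    have c4: "\<forall>b\<in>B. \<forall>x\<in>S. act b x \<in> S"
    proof (intro ballI)
      fix b X assume b: "b \<in> B" and "X \<in> S"
      then obtain x where x: "x \<in> carrier_mat n 1" "\<forall>b\<in>B. Z (b * x)" "X = {x}" unfolding S_iff by blast
      have "\<forall>b'\<in>B. Z (b' * (b * x))"
      proof
        fix b' assume b': "b' \<in> B"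
        have "b' * (b * x) = (b' * b) * x" using b b' x Bc by (simp add: assoc_mult_mat[of _ n n _ n _ 1])
        thus "Z (b' * (b * x))" using x Bmul b b' by simp
      qed
      moreover have "b * x \<in> carrier_mat n 1" using Bc[OF b] x by auto
      ultimately show "act b X \<in> S" unfolding S_iff using x by (auto simp: act1)
    qed
    have c5: "\<forall>f. module_endo n U pl act f \<longrightarrow> (\<forall>x\<in>S. f x \<in> S)"
    proof (intro allI impI ballI)
      fix f X assume f: "module_endo n U pl act f" and "X \<in> S"
      then obtain z where z: "z \<in> carrier_mat n 1" "\<forall>b\<in>B. Z (b * z)" "X = {z}" unfolding S_iff by blast
      define e1 :: "'a mat" where "e1 = mat n 1 (\<lambda>(i, _). if i = 0 then 1 else 0)"
      have e1c: "e1 \<in> carrier_mat n 1" unfolding e1_def by simp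
      have "f {e1} \<in> U" using f e1c unfolding module_endo_def U_def by auto
      then obtain g where g: "g \<in> carrier_mat n 1" "f {e1} = {g}" using U_iff by blast
      define az :: "'a mat" where "az = mat n n (\<lambda>(r, j). if j = 0 then z $$ (r, 0) else 0)"
      have azc: "az \<in> carrier_mat n n" unfolding az_def by simp
      have aze: "az * e1 = z"
      proof (rule eq_matI)
        fix r j assume r: "r < dim_row z" and j: "j < dim_col z"
        hence j0: "j = 0" using z by auto
        have "(az * e1) $$ (r, j) = (\<Sum>l<n. (if l = 0 then z $$ (r, 0) else 0) * (if l = 0 then 1 else 0))"
          using r z j0 azc e1c by (subst mult_idx[of _ n n _ 1]) (auto simp: az_def e1_def intro!: sum.cong)
        also have "\<dots> = z $$ (r, 0)" using n by (simp add: sum_if_mult)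
        finally show "(az * e1) $$ (r, j) = z $$ (r, j)" using j0 by simp
      qed (use z azc e1c in auto)
      have "f X = f (act az {e1})" using z aze by (simp add: act1)
      also have "\<dots> = act az (f {e1})" using f azc e1c unfolding module_endo_def allU by auto
      also have "\<dots> = {az * g}" using g by (simp add: act1)
      finally have fX: "f X = {az * g}" .
      define D :: "'a mat" where "D = mat 1 1 (\<lambda>_. g $$ (0, 0))"
      have azg: "az * g = z * D"
      proof (rule eq_matI)
        fix r j assume r: "r < dim_row (z * D)" and j: "j < dim_col (z * D)"
        hence j0: "j = 0" and rn: "r < n" using z by (auto simp: D_def)
        have "(az * g) $$ (r, j) = (\<Sum>l<n. (if l = 0 then z $$ (r, 0) else 0) * g $$ (l, 0))"
          using rn g j0 azc by (subst mult_idx[of _ n n _ 1]) (auto simp: az_def intro!: sum.cong)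
        also have "\<dots> = z $$ (r, 0) * g $$ (0, 0)" using n by (simp add: sum_if_mult)
        also have "\<dots> = (z * D) $$ (r, j)" using rn j0 z by (subst mult_idx[of _ n 1 _ 1]) (auto simp: D_def)
        finally show "(az * g) $$ (r, j) = (z * D) $$ (r, j)" .
      qed (use z g azc in \<open>auto simp: D_def\<close>)
      have "\<forall>b\<in>B. Z (b * (z * D))"
      proof
        fix b assume b: "b \<in> B"
        have "b * (z * D) = (b * z) * D" using Bc[OF b] z by (simp add: D_def assoc_mult_mat[of _ n n _ 1 _ 1])
        moreover have "b * z \<in> carrier_mat n 1" using Bc[OF b] z by auto
        ultimately show "Z (b * (z * D))" using Zsc z b unfolding D_def by auto
      qed
      thus "f X \<in> S" unfolding fX azg S_iff using z by (auto simp: D_def)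
    qed
    have H: "\<forall>S. S \<subseteq> U \<and> z0 \<in> S \<and> (\<forall>x\<in>S. \<forall>y\<in>S. pl x y \<in> S) \<and>
          (\<forall>b\<in>B. \<forall>x\<in>S. act b x \<in> S) \<and>
          (\<forall>f. module_endo n U pl act f \<longrightarrow> (\<forall>x\<in>S. f x \<in> S))
        \<longrightarrow> S = {z0} \<or> S = U" using sb unfolding simple_bimodule_def by (elim conjE)
    show ?thesis by (rule H[rule_format]) (intro conjI c1 c2 c3 c4 c5)
  qed
  moreover have "{u} \<in> S" unfolding S_iff using u allb by auto
  moreover have "{u} \<noteq> z0" using u z0_def by auto
  ultimately have "S = U" by auto
  hence "{e} \<in> S" using e unfolding U_def by auto
  hence "Z (1\<^sub>m n * e)" unfolding S_iff using B1 by auto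
  thus False using e by simp
qed

lemma central: "central_subfield k \<Longrightarrow> c \<in> k \<Longrightarrow> c * d = d * c"
  unfolding central_subfield_def by blast

lemma neg_inv_in: "central_subfield k \<Longrightarrow> c \<in> k \<Longrightarrow> c \<noteq> 0 \<Longrightarrow> - inverse c \<in> k"
  unfolding central_subfield_def by blast

lemma sum_mult_if:
  fixes f :: "nat \<Rightarrow> 'a::semiring_1"
  assumes "finite S"
  shows "(\<Sum>s\<in>S. f s * (if t = s then 1 else 0)) = (if t \<in> S then f t else 0)"
    "(\<Sum>s\<in>S. f s * (if s = t then 1 else 0)) = (if t \<in> S then f t else 0)"
proof -
  have "(\<Sum>s\<in>S. f s * (if t = s then 1 else 0)) = (\<Sum>s\<in>S. if s = t then f t else 0)"
    by (rule sum.cong) auto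
  thus "(\<Sum>s\<in>S. f s * (if t = s then 1 else 0)) = (if t \<in> S then f t else 0)"
    using assms by (simp add: sum.delta')
  have "(\<Sum>s\<in>S. f s * (if s = t then 1 else 0)) = (\<Sum>s\<in>S. if s = t then f t else 0)"
    by (rule sum.cong) auto
  thus "(\<Sum>s\<in>S. f s * (if s = t then 1 else 0)) = (if t \<in> S then f t else 0)"
    using assms by (simp add: sum.delta')
qed

lemma smult_one_mult_idx:
  fixes w :: "'a::ring_1 mat"
  assumes "w \<in> carrier_mat n p" "i < n" "t < p"
  shows "((c \<cdot>\<^sub>m 1\<^sub>m n) * w) $$ (i, t) = c * w $$ (i, t)"
proof -
  have "((c \<cdot>\<^sub>m 1\<^sub>m n) * w) $$ (i, t) = (\<Sum>l<n. (if i = l then c else 0) * w $$ (l, t))"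
    using assms by (subst mult_idx[of _ n n _ p]) (auto intro!: sum.cong)
  also have "\<dots> = (\<Sum>l<n. (if l = i then c else 0) * w $$ (l, t))" by (intro sum.cong) auto
  also have "\<dots> = c * w $$ (i, t)" using assms by (simp add: sum_if_mult)
  finally show ?thesis .
qed

lemma generic_c:
  fixes M w :: "'a::division_ring mat" and k :: "'a set"
  assumes cs: "central_subfield k" and inf: "infinite k"
    and Mc: "M \<in> carrier_mat n p" and wc: "w \<in> carrier_mat n p"
    and Pn: "\<forall>s<\<rho>. P s < n" and i0: "i0 < n" and rp: "\<rho> < p"
    and t0: "\<rho> \<le> t0" "t0 < p"
    and piv: "\<forall>s<\<rho>. \<forall>t<p. M $$ (P s, t) = (if t = s then 1 else 0)"
    and Mt0: "\<forall>i<n. M $$ (i, t0) = 0"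
    and del: "w $$ (i0, t0) - (\<Sum>s<\<rho>. M $$ (i0, s) * w $$ (P s, t0)) \<noteq> 0"
  shows "\<exists>c\<in>k. c \<noteq> 0 \<and> rows_indep (M + (c \<cdot>\<^sub>m 1\<^sub>m n) * w) (\<lambda>s. if s = \<rho> then i0 else P s) (Suc \<rho>)"
proof (rule ccontr)
  assume nex: "\<not> ?thesis"
  define P' where "P' s = (if s = \<rho> then i0 else P s)" for s
  define x where "x i = w $$ (i, t0)" for i
  define C where "C j = M $$ (i0, j)" for j
  define dl where "dl = x i0 - (\<Sum>l<\<rho>. C l * x (P l))"
  have dl0: "dl \<noteq> 0" using del unfolding dl_def x_def C_def by simp
  define di where "di = inverse dl"
  have dldi: "dl * di = 1" using dl0 unfolding di_def by simp
  define Q0 where "Q0 s j = (if j < \<rho> then M $$ (P' s, j) else x (P' s))" for s j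
  define Q1 where "Q1 s j = (if j < \<rho> then w $$ (P' s, j) else 0)" for s j
  define Qi where "Qi l j = (if l < \<rho> then (if j < \<rho> then (if l = j then 1 else 0) + x (P l) * di * C j else - (x (P l) * di))
            else (if j < \<rho> then - (di * C j) else di))" for l j
  have Q0piv: "Q0 s l = (if l = s then 1 else 0)" if "s < \<rho>" "l < \<rho>" for s l
    using that piv rp unfolding Q0_def P'_def by auto
  have Q0piv2: "Q0 s \<rho> = x (P s)" if "s < \<rho>" for s using that unfolding Q0_def P'_def by auto
  have Q0r: "Q0 \<rho> l = C l" if "l < \<rho>" for l using that unfolding Q0_def P'_def C_def by auto
  have Q0rr: "Q0 \<rho> \<rho> = x i0" unfolding Q0_def P'_def by auto
  have QQ: "(\<Sum>l<Suc \<rho>. Q0 s l * Qi l j) = (if s = j then 1 else 0)" if s: "s < Suc \<rho>" and j: "j < Suc \<rho>" for s j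
  proof -
    have split: "(\<Sum>l<Suc \<rho>. Q0 s l * Qi l j) = (\<Sum>l<\<rho>. Q0 s l * Qi l j) + Q0 s \<rho> * Qi \<rho> j"
      by simp
    show ?thesis
    proof (cases "s < \<rho>")
      case sl: True
      have a: "(\<Sum>l<\<rho>. Q0 s l * Qi l j) = Qi s j"
      proof -
        have "(\<Sum>l<\<rho>. Q0 s l * Qi l j) = (\<Sum>l<\<rho>. (if l = s then 1 else 0) * Qi l j)"
          using sl by (intro sum.cong refl) (simp add: Q0piv)
        also have "\<dots> = Qi s j" using sl by (simp add: sum_if_mult)
        finally show ?thesis .
      qed
      show ?thesis
      proof (cases "j < \<rho>")
        case True
        then show ?thesis unfolding split a using sl
          by (simp add: Q0piv2 Qi_def mult.assoc)
      next
        case False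
        hence "j = \<rho>" using j by auto
        then show ?thesis unfolding split a using sl
          by (simp add: Q0piv2 Qi_def mult.assoc)
      qed
    next
      case False
      hence sr: "s = \<rho>" using s by auto
      have ssum: "(\<Sum>l<\<rho>. Q0 \<rho> l * Qi l j) = (\<Sum>l<\<rho>. C l * Qi l j)"
        by (intro sum.cong refl) (simp add: Q0r)
      show ?thesis
      proof (cases "j < \<rho>")
        case jl: True
        have "(\<Sum>l<\<rho>. C l * Qi l j) = (\<Sum>l<\<rho>. C l * (if l = j then 1 else 0)) + (\<Sum>l<\<rho>. C l * x (P l)) * di * C j"
          using jl by (simp add: Qi_def sum.distrib distrib_left sum_distrib_right mult.assoc)
        also have "\<dots> = C j + (\<Sum>l<\<rho>. C l * x (P l)) * di * C j"
          using jl by (simp add: sum_mult_if)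
        finally have e1: "(\<Sum>l<\<rho>. C l * Qi l j) = C j + (\<Sum>l<\<rho>. C l * x (P l)) * di * C j" .
        have e2: "Q0 s \<rho> * Qi \<rho> j = - (x i0 * di * C j)" using sr jl by (simp add: Q0rr Qi_def mult.assoc)
        have "C j + (\<Sum>l<\<rho>. C l * x (P l)) * di * C j - x i0 * di * C j = C j - dl * di * C j"
          unfolding dl_def by (simp add: algebra_simps)
        also have "\<dots> = 0" using dldi by simp
        finally show ?thesis unfolding split sr[symmetric] using ssum e1 e2 sr jl by simp
      next
        case False
        hence jr: "j = \<rho>" using j by auto
        have e1: "(\<Sum>l<\<rho>. C l * Qi l j) = - ((\<Sum>l<\<rho>. C l * x (P l)) * di)"
          using jr by (simp add: Qi_def sum_distrib_right sum_negf mult.assoc)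
        have e2: "Q0 s \<rho> * Qi \<rho> j = x i0 * di" using sr jr by (simp add: Q0rr Qi_def)
        have "- ((\<Sum>l<\<rho>. C l * x (P l)) * di) + x i0 * di = dl * di"
          unfolding dl_def by (simp add: algebra_simps)
        then show ?thesis unfolding split using ssum e1 e2 sr jr dldi by simp
      qed
    qed
  qed
  define K where "K l j = (\<Sum>m<Suc \<rho>. Qi l m * Q1 m j)" for l j
  define R where "R e \<beta> \<longleftrightarrow> (\<exists>j<Suc \<rho>. \<beta> j \<noteq> 0) \<and> (\<forall>j<Suc \<rho>. (\<Sum>l<Suc \<rho>. \<beta> l * K l j) = e * \<beta> j)" for e \<beta>
  define E where "E = {e \<in> k. \<exists>\<beta>. R e \<beta>}"
  have inE: "- inverse c \<in> E" if c: "c \<in> k" "c \<noteq> 0" for c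
  proof -
    let ?N = "M + (c \<cdot>\<^sub>m 1\<^sub>m n) * w"
    have Nidx: "?N $$ (i, t) = M $$ (i, t) + c * w $$ (i, t)" if "i < n" "t < p" for i t
      using that Mc wc smult_one_mult_idx[OF wc] by simp
    have "\<not> rows_indep ?N P' (Suc \<rho>)" using nex c unfolding P'_def by blast
    moreover have "dim_col ?N = p" using Mc wc by simp
    ultimately obtain \<alpha> where ah: "\<forall>t<p. (\<Sum>s<Suc \<rho>. \<alpha> s * ?N $$ (P' s, t)) = 0"
      and anz: "\<exists>s<Suc \<rho>. \<alpha> s \<noteq> 0" unfolding rows_indep_def by auto
    have P'n: "P' s < n" if "s < Suc \<rho>" for s using that Pn i0 unfolding P'_def by auto
    have eq: "(\<Sum>s<Suc \<rho>. \<alpha> s * (Q0 s j + c * Q1 s j)) = 0" if j: "j < Suc \<rho>" for j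
    proof (cases "j < \<rho>")
      case True
      have "(\<Sum>s<Suc \<rho>. \<alpha> s * (Q0 s j + c * Q1 s j)) = (\<Sum>s<Suc \<rho>. \<alpha> s * ?N $$ (P' s, j))"
        using True rp by (intro sum.cong refl) (simp add: Q0_def Q1_def Nidx P'n)
      also have "\<dots> = 0" using ah True rp by simp
      finally show ?thesis .
    next
      case False
      hence jr: "j = \<rho>" using j by auto
      have "c * (\<Sum>s<Suc \<rho>. \<alpha> s * x (P' s)) = (\<Sum>s<Suc \<rho>. \<alpha> s * ?N $$ (P' s, t0))"
        unfolding sum_distrib_left
      proof (intro sum.cong refl)
        fix s assume s: "s \<in> {..<Suc \<rho>}"
        have "c * (\<alpha> s * x (P' s)) = \<alpha> s * (c * x (P' s))"
          using central[OF cs c(1)] by (metis mult.assoc)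
        thus "c * (\<alpha> s * x (P' s)) = \<alpha> s * ?N $$ (P' s, t0)"
          using s t0 P'n Mt0 by (simp add: Nidx x_def)
      qed
      also have "\<dots> = 0" using ah t0 by simp
      finally have "(\<Sum>s<Suc \<rho>. \<alpha> s * x (P' s)) = 0" using c by simp
      thus ?thesis using jr by (simp add: Q0_def Q1_def)
    qed
    define \<beta> where "\<beta> j = (\<Sum>s<Suc \<rho>. \<alpha> s * Q0 s j)" for j
    have bQi: "(\<Sum>l<Suc \<rho>. \<beta> l * Qi l m) = \<alpha> m" if m: "m < Suc \<rho>" for m
    proof -
      have "(\<Sum>l<Suc \<rho>. \<beta> l * Qi l m) = (\<Sum>s<Suc \<rho>. \<alpha> s * (\<Sum>l<Suc \<rho>. Q0 s l * Qi l m))"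
        unfolding \<beta>_def by (rule sum_assoc3)
      also have "\<dots> = (\<Sum>s<Suc \<rho>. \<alpha> s * (if s = m then 1 else 0))"
      proof (intro sum.cong refl)
        fix s assume "s \<in> {..<Suc \<rho>}"
        thus "\<alpha> s * (\<Sum>l<Suc \<rho>. Q0 s l * Qi l m) = \<alpha> s * (if s = m then 1 else 0)"
          using m by (subst QQ) auto
      qed
      also have "\<dots> = \<alpha> m" by (subst sum_mult_if(2)) (use m in auto)
      finally show ?thesis .
    qed
    have bnz: "\<exists>j<Suc \<rho>. \<beta> j \<noteq> 0"
    proof (rule ccontr)
      assume nb: "\<not> ?thesis"
      have "\<forall>m<Suc \<rho>. \<alpha> m = 0"
      proof (intro allI impI)
        fix m assume m: "m < Suc \<rho>"
        have "\<alpha> m = (\<Sum>l<Suc \<rho>. \<beta> l * Qi l m)" using bQi[OF m] by simp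
        also have "\<dots> = 0" using nb by (intro sum.neutral) auto
        finally show "\<alpha> m = 0" .
      qed
      thus False using anz by blast
    qed
    have eig: "(\<Sum>l<Suc \<rho>. \<beta> l * K l j) = - inverse c * \<beta> j" if j: "j < Suc \<rho>" for j
    proof -
      define \<gamma> where "\<gamma> = (\<Sum>m<Suc \<rho>. \<alpha> m * Q1 m j)"
      have "(\<Sum>l<Suc \<rho>. \<beta> l * K l j) = (\<Sum>m<Suc \<rho>. (\<Sum>l<Suc \<rho>. \<beta> l * Qi l m) * Q1 m j)"
        unfolding K_def by (rule sum_assoc3[symmetric])
      also have "\<dots> = \<gamma>" unfolding \<gamma>_def
      proof (intro sum.cong refl)
        fix m assume "m \<in> {..<Suc \<rho>}"
        thus "(\<Sum>l<Suc \<rho>. \<beta> l * Qi l m) * Q1 m j = \<alpha> m * Q1 m j" by (subst bQi) auto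
      qed
      finally have 1: "(\<Sum>l<Suc \<rho>. \<beta> l * K l j) = \<gamma>" .
      have "(\<Sum>s<Suc \<rho>. \<alpha> s * (Q0 s j + c * Q1 s j)) = \<beta> j + c * \<gamma>"
        unfolding \<beta>_def \<gamma>_def distrib_left sum.distrib sum_distrib_left
      proof (intro arg_cong2[where f = "(+)"] refl sum.cong)
        fix s show "\<alpha> s * (c * Q1 s j) = c * (\<alpha> s * Q1 s j)"
          using central[OF cs c(1)] by (metis mult.assoc)
      qed
      hence h: "\<beta> j + c * \<gamma> = 0" using eq[OF j] by simp
      have cg: "c * \<gamma> = - \<beta> j"
      proof -
        have "c * \<gamma> = (\<beta> j + c * \<gamma>) - \<beta> j" by simp
        thus ?thesis using h by simp
      qed
      have "\<gamma> = inverse c * (c * \<gamma>)" using c by (simp add: mult.assoc[symmetric])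
      also have "\<dots> = - inverse c * \<beta> j" using cg by simp
      finally have "\<gamma> = - inverse c * \<beta> j" .
      thus ?thesis using 1 by simp
    qed
    show ?thesis unfolding E_def R_def using neg_inv_in[OF cs c] bnz eig by blast
  qed
  have "(\<lambda>c. - inverse c) ` (k - {0}) \<subseteq> E" using inE by blast
  moreover have "inj_on (\<lambda>c. - inverse c) (k - {0})"
    by (intro inj_onI) simp
  moreover have "infinite (k - {0})" using inf by simp
  ultimately have infE: "infinite E"
  proof -
    assume sub: "(\<lambda>c. - inverse c) ` (k - {0}) \<subseteq> E" and inj: "inj_on (\<lambda>c. - inverse c) (k - {0})"
      and ik: "infinite (k - {0})"
    show "infinite E"
    proof
      assume "finite E"
      hence "finite ((\<lambda>c. - inverse c) ` (k - {0}))" using sub finite_subset by blast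
      hence "finite (k - {0})" using inj finite_image_iff by blast
      thus False using ik by blast
    qed
  qed
  obtain L where L: "L \<subseteq> E" "finite L" "card L = Suc (Suc \<rho>)"
    using infinite_arbitrarily_large[OF infE] by blast
  define bb where "bb e = (SOME \<beta>. R e \<beta>)" for e
  have bb: "R e (bb e)" if "e \<in> E" for e
  proof -
    from that have "\<exists>\<beta>. R e \<beta>" unfolding E_def by blast
    thus ?thesis unfolding bb_def by (rule someI_ex)
  qed
  have Lk: "L \<subseteq> k" using L E_def by auto
  have b1: "\<forall>e\<in>L. \<forall>j<Suc \<rho>. (\<Sum>l<Suc \<rho>. bb e l * K l j) = e * bb e j"
    using bb L(1) unfolding R_def by blast
  have b2: "\<forall>e\<in>L. \<exists>j<Suc \<rho>. bb e j \<noteq> 0" using bb L(1) unfolding R_def by blast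
  have b3: "\<forall>e\<in>L. \<forall>x. e * x = x * e" using Lk central[OF cs] by blast
  have "\<forall>\<alpha>. (\<forall>j<Suc \<rho>. (\<Sum>e\<in>L. \<alpha> e * bb e j) = 0) \<longrightarrow> (\<forall>e\<in>L. \<alpha> e = 0)"
    by (rule eigen_indep[OF L(2) b3 b1 b2])
  hence "card L \<le> Suc \<rho>" by (rule dim_bound[OF L(2)])
  thus False using L by simp
qed

definition fullsub :: "nat \<Rightarrow> nat \<Rightarrow> 'a::division_ring mat set \<Rightarrow> 'a mat set \<Rightarrow> bool" where
  "fullsub n p B V \<longleftrightarrow> B_submodule n p B V \<and> A_span n p V = carrier_mat n p"

lemma aspan_carrier:
  assumes "V \<subseteq> carrier_mat n p" "z \<in> A_span n p V" shows "z \<in> carrier_mat n p"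
  using assms(2) by (induction rule: A_span.induct) (use assms(1) in auto)

lemma bsub_image:
  fixes B V :: "'a::division_ring mat set"
  assumes V: "B_submodule n p B V" and Bc: "B \<subseteq> carrier_mat n n" and Pm: "Pm \<in> carrier_mat p p'"
  shows "B_submodule n p' B ((\<lambda>X. X * Pm) ` V)"
proof -
  have Vc: "V \<subseteq> carrier_mat n p" using V unfolding B_submodule_def by auto
  show ?thesis unfolding B_submodule_def
  proof (intro conjI ballI)
    show "(\<lambda>X. X * Pm) ` V \<subseteq> carrier_mat n p'" using Vc Pm by auto
    have "0\<^sub>m n p * Pm = 0\<^sub>m n p'" using Pm by (simp add: left_mult_zero_mat)
    moreover have "0\<^sub>m n p \<in> V" using V unfolding B_submodule_def by blast
    ultimately show "0\<^sub>m n p' \<in> (\<lambda>X. X * Pm) ` V" by (intro image_eqI[of _ _ "0\<^sub>m n p"]) auto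
  next
    fix x y assume "x \<in> (\<lambda>X. X * Pm) ` V" "y \<in> (\<lambda>X. X * Pm) ` V"
    then obtain x' y' where xy: "x' \<in> V" "y' \<in> V" "x = x' * Pm" "y = y' * Pm" by blast
    have "x' + y' \<in> V" using xy V unfolding B_submodule_def by blast
    moreover have "x + y = (x' + y') * Pm"
    proof -
      have "x' \<in> carrier_mat n p" "y' \<in> carrier_mat n p" using xy Vc by auto
      thus ?thesis using xy Pm by (simp add: add_mult_distrib_mat[of x' n p y' Pm p'])
    qed
    ultimately show "x + y \<in> (\<lambda>X. X * Pm) ` V" by blast
  next
    fix x assume "x \<in> (\<lambda>X. X * Pm) ` V"
    then obtain x' where x: "x' \<in> V" "x = x' * Pm" by blast
    have "- x' \<in> V" using x V unfolding B_submodule_def by blast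
    moreover have "- x = (- x') * Pm" using x Vc Pm by (subst uminus_mult_left_mat) auto
    ultimately show "- x \<in> (\<lambda>X. X * Pm) ` V" by blast
  next
    fix b x assume b: "b \<in> B" and "x \<in> (\<lambda>X. X * Pm) ` V"
    then obtain x' where x: "x' \<in> V" "x = x' * Pm" by blast
    have "b * x' \<in> V" using x b V unfolding B_submodule_def by blast
    moreover have "b * x = (b * x') * Pm" using x Vc Pm b Bc
      by (subst assoc_mult_mat[of _ n n _ p _ p']) auto
    ultimately show "b * x \<in> (\<lambda>X. X * Pm) ` V" by blast
  qed
qed

lemma aspan_image:
  fixes V :: "'a::division_ring mat set"
  assumes Vc: "V \<subseteq> carrier_mat n p" and Pm: "Pm \<in> carrier_mat p p'" and z: "z \<in> A_span n p V"
  shows "z * Pm \<in> A_span n p' ((\<lambda>X. X * Pm) ` V)"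
  using z
proof (induction rule: A_span.induct)
  case zero
  have "0\<^sub>m n p * Pm = 0\<^sub>m n p'" using Pm by (simp add: left_mult_zero_mat)
  then show ?case by (simp add: A_span.zero)
next
  case (step a v x)
  have vc: "v \<in> carrier_mat n p" using step Vc by auto
  have xc: "x \<in> carrier_mat n p" using step aspan_carrier[OF Vc] by auto
  have eq: "(a * v + x) * Pm = a * (v * Pm) + x * Pm"
    using step vc xc Pm by (simp add: add_mult_distrib_mat[of _ n p] assoc_mult_mat[of _ n n _ p _ p'])
  have "v * Pm \<in> (\<lambda>X. X * Pm) ` V" using step by blast
  show ?case unfolding eq by (rule A_span.step) (use step \<open>v * Pm \<in> (\<lambda>X. X * Pm) ` V\<close> in auto)
qed

lemma fullsub_inv:
  fixes V :: "'a::division_ring mat set"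
  assumes fs: "fullsub n p B V" and Bc: "B \<subseteq> carrier_mat n n" and T: "inv_mat p T"
  shows "fullsub n p B ((\<lambda>X. X * T) ` V)"
proof -
  obtain T' where TT: "T \<in> carrier_mat p p" "T' \<in> carrier_mat p p" "T' * T = 1\<^sub>m p"
    using T unfolding inv_mat_def by blast
  have bs: "B_submodule n p B V" and sp: "A_span n p V = carrier_mat n p" using fs unfolding fullsub_def by auto
  have Vc: "V \<subseteq> carrier_mat n p" using bs unfolding B_submodule_def by auto
  have bs': "B_submodule n p B ((\<lambda>X. X * T) ` V)" by (rule bsub_image[OF bs Bc TT(1)])
  have V'c: "(\<lambda>X. X * T) ` V \<subseteq> carrier_mat n p" using bs' unfolding B_submodule_def by auto
  have "A_span n p ((\<lambda>X. X * T) ` V) = carrier_mat n p"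
  proof
    show "A_span n p ((\<lambda>X. X * T) ` V) \<subseteq> carrier_mat n p" using aspan_carrier[OF V'c] by blast
    show "carrier_mat n p \<subseteq> A_span n p ((\<lambda>X. X * T) ` V)"
    proof
      fix Y :: "'a mat" assume Y: "Y \<in> carrier_mat n p"
      have "Y * T' \<in> A_span n p V" using Y TT sp by auto
      hence "(Y * T') * T \<in> A_span n p ((\<lambda>X. X * T) ` V)" by (rule aspan_image[OF Vc TT(1)])
      moreover have "(Y * T') * T = Y" using Y TT by (simp add: assoc_mult_mat[of _ n p _ p _ p])
      ultimately show "Y \<in> A_span n p ((\<lambda>X. X * T) ` V)" by simp
    qed
  qed
  thus ?thesis using bs' unfolding fullsub_def by simp
qed

lemma exists_nonzero_col:
  fixes V :: "'a::division_ring mat set"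
  assumes fs: "fullsub n p B V" and n1: "n \<ge> 1" and rp: "\<rho> < p"
  shows "\<exists>w\<in>V. \<exists>t. \<rho> \<le> t \<and> t < p \<and> (\<exists>i<n. w $$ (i, t) \<noteq> 0)"
proof (rule ccontr)
  assume "\<not> ?thesis"
  hence nex: "\<And>w t i. w \<in> V \<Longrightarrow> \<rho> \<le> t \<Longrightarrow> t < p \<Longrightarrow> i < n \<Longrightarrow> w $$ (i, t) = 0" by blast
  have bs: "B_submodule n p B V" and sp: "A_span n p V = carrier_mat n p" using fs unfolding fullsub_def by auto
  have Vc: "V \<subseteq> carrier_mat n p" using bs unfolding B_submodule_def by auto
  have allz: "\<forall>i t. i < n \<longrightarrow> \<rho> \<le> t \<longrightarrow> t < p \<longrightarrow> z $$ (i, t) = 0" if z: "z \<in> A_span n p V" for z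
    using z
  proof (induction rule: A_span.induct)
    case zero
    then show ?case by simp
  next
    case (step a v x)
    show ?case
    proof (intro allI impI)
      fix i t assume it: "i < n" "\<rho> \<le> t" "t < p"
      have vc: "v \<in> carrier_mat n p" using step Vc by auto
      have xc: "x \<in> carrier_mat n p" using step aspan_carrier[OF Vc] by auto
      have "(a * v) $$ (i, t) = (\<Sum>l<n. a $$ (i, l) * v $$ (l, t))"
        using step vc it by (subst mult_idx[of _ n n _ p]) auto
      also have "\<dots> = 0" using nex[OF step(2) it(2,3)] by (intro sum.neutral) auto
      finally show "(a * v + x) $$ (i, t) = 0" using step it vc xc by simp
    qed
  qed
  have "mat n p (\<lambda>(i, t). if i = 0 \<and> t = \<rho> then 1 else 0) \<in> A_span n p V" using sp by simp
  from allz[OF this, rule_format, of 0 \<rho>] show False using n1 rp by simp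
qed

lemma pivot_step:
  fixes M :: "'a::division_ring mat" and k :: "'a set"
  assumes cs: "central_subfield k" and inf: "infinite k" and n1: "n \<ge> 1"
    and sub: "k_subalgebra n k B" and dense: "dense_in n B"
    and fs: "fullsub n p B V" and MV: "M \<in> V"
    and inj: "inj_on P {..<\<rho>}" and Pn: "\<forall>s<\<rho>. P s < n" and rn: "\<rho> < n" and rp: "\<rho> < p"
    and piv: "\<forall>s<\<rho>. \<forall>t<p. M $$ (P s, t) = (if t = s then 1 else 0)"
  shows "\<exists>N\<in>V. \<exists>i0<n. i0 \<notin> P ` {..<\<rho>} \<and> rows_indep N (\<lambda>s. if s = \<rho> then i0 else P s) (Suc \<rho>)"
proof -
  have bs: "B_submodule n p B V" using fs unfolding fullsub_def by auto
  have Vc: "V \<subseteq> carrier_mat n p" using bs unfolding B_submodule_def by auto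
  have Mc: "M \<in> carrier_mat n p" using MV Vc by auto
  have Bc: "B \<subseteq> carrier_mat n n" using sub unfolding k_subalgebra_def by auto
  show ?thesis
  proof (cases "\<exists>i0<n. i0 \<notin> P ` {..<\<rho>} \<and> (\<exists>t. \<rho> \<le> t \<and> t < p \<and> M $$ (i0, t) \<noteq> 0)")
    case True
    then obtain i0 t where i0: "i0 < n" "i0 \<notin> P ` {..<\<rho>}" and t: "\<rho> \<le> t" "t < p" "M $$ (i0, t) \<noteq> 0"
      by blast
    have "rows_indep M (\<lambda>s. if s = \<rho> then i0 else P s) (Suc \<rho>)" unfolding rows_indep_def
    proof (rule allI, rule impI)
      fix \<alpha> assume h: "\<forall>t<dim_col M. (\<Sum>s<Suc \<rho>. \<alpha> s * M $$ (if s = \<rho> then i0 else P s, t)) = 0"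
      have sp: "(\<Sum>s<Suc \<rho>. \<alpha> s * M $$ (if s = \<rho> then i0 else P s, t')) = (if t' < \<rho> then \<alpha> t' else 0) + \<alpha> \<rho> * M $$ (i0, t')"
        if t': "t' < p" for t'
      proof -
        have "(\<Sum>s<\<rho>. \<alpha> s * M $$ (if s = \<rho> then i0 else P s, t')) = (\<Sum>s<\<rho>. \<alpha> s * (if t' = s then 1 else 0))"
          using piv t' by (intro sum.cong refl) auto
        also have "\<dots> = (if t' < \<rho> then \<alpha> t' else 0)" by (simp add: sum_mult_if)
        finally show ?thesis by simp
      qed
      have "\<alpha> \<rho> * M $$ (i0, t) = 0" using h[rule_format, of t] sp[of t] t Mc by simp
      hence a\<rho>: "\<alpha> \<rho> = 0" using t by simp
      show "\<forall>s<Suc \<rho>. \<alpha> s = 0"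
      proof (intro allI impI)
        fix s assume s: "s < Suc \<rho>"
        show "\<alpha> s = 0"
        proof (cases "s = \<rho>")
          case False
          hence "s < \<rho>" using s by auto
          thus ?thesis using h[rule_format, of s] sp[of s] a\<rho> rp Mc by simp
        qed (use a\<rho> in simp)
      qed
    qed
    then show ?thesis using MV i0 by blast
  next
    case False
    have hb: "M $$ (i, t) = 0" if "i < n" "\<rho> \<le> t" "t < p" for i t
    proof (cases "i \<in> P ` {..<\<rho>}")
      case True
      then obtain s where "s < \<rho>" "i = P s" by auto
      thus ?thesis using piv that by auto
    next
      case False
      thus ?thesis using \<open>\<not> (\<exists>i0<n. i0 \<notin> P ` {..<\<rho>} \<and> (\<exists>t. \<rho> \<le> t \<and> t < p \<and> M $$ (i0, t) \<noteq> 0))\<close> that by blast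
    qed
    obtain w0 t0 i1 where w0: "w0 \<in> V" and t0: "\<rho> \<le> t0" "t0 < p" and i1: "i1 < n" "w0 $$ (i1, t0) \<noteq> 0"
      using exists_nonzero_col[OF fs n1 rp] by blast
    have w0c: "w0 \<in> carrier_mat n p" using w0 Vc by auto
    define u :: "'a mat" where "u = mat n 1 (\<lambda>(i, j). w0 $$ (i, t0))"
    have uc: "u \<in> carrier_mat n 1" unfolding u_def by simp
    have u0: "u \<noteq> 0\<^sub>m n 1"
    proof
      assume "u = 0\<^sub>m n 1"
      hence "u $$ (i1, 0) = 0" using i1 by simp
      thus False using i1 unfolding u_def by simp
    qed
    define Z :: "'a mat \<Rightarrow> bool" where "Z z \<longleftrightarrow> (\<forall>i<n. z $$ (i, 0) = (\<Sum>s<\<rho>. M $$ (i, s) * z $$ (P s, 0)))" for z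
    have Z0: "Z (0\<^sub>m n 1)" unfolding Z_def using Pn by simp
    have Zadd: "\<forall>x\<in>carrier_mat n 1. \<forall>y\<in>carrier_mat n 1. Z x \<longrightarrow> Z y \<longrightarrow> Z (x + y)"
    proof (intro ballI impI)
      fix x y :: "'a mat" assume x: "x \<in> carrier_mat n 1" and y: "y \<in> carrier_mat n 1" and Zx: "Z x" and Zy: "Z y"
      show "Z (x + y)" unfolding Z_def
      proof (intro allI impI)
        fix i assume i: "i < n"
        have "(\<Sum>s<\<rho>. M $$ (i, s) * (x + y) $$ (P s, 0)) = (\<Sum>s<\<rho>. M $$ (i, s) * x $$ (P s, 0)) + (\<Sum>s<\<rho>. M $$ (i, s) * y $$ (P s, 0))"
          unfolding sum.distrib[symmetric] using x y Pn by (intro sum.cong refl) (simp add: distrib_left)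
        thus "(x + y) $$ (i, 0) = (\<Sum>s<\<rho>. M $$ (i, s) * (x + y) $$ (P s, 0))"
          using Zx Zy i x y unfolding Z_def by simp
      qed
    qed
    have Zsc: "\<forall>x\<in>carrier_mat n 1. \<forall>d. Z x \<longrightarrow> Z (x * mat 1 1 (\<lambda>_. d))"
    proof (intro ballI allI impI)
      fix x :: "'a mat" and d assume x: "x \<in> carrier_mat n 1" and Zx: "Z x"
      have idx: "(x * mat 1 1 (\<lambda>_. d)) $$ (i, 0) = x $$ (i, 0) * d" if "i < n" for i
        using that x by (subst mult_idx[of _ n 1 _ 1]) auto
      show "Z (x * mat 1 1 (\<lambda>_. d))" unfolding Z_def
      proof (intro allI impI)
        fix i assume i: "i < n"
        have "(\<Sum>s<\<rho>. M $$ (i, s) * (x * mat 1 1 (\<lambda>_. d)) $$ (P s, 0)) = (\<Sum>s<\<rho>. M $$ (i, s) * x $$ (P s, 0)) * d"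
          unfolding sum_distrib_right
        proof (intro sum.cong refl)
          fix s assume "s \<in> {..<\<rho>}"
          hence "P s < n" using Pn by auto
          thus "M $$ (i, s) * (x * mat 1 1 (\<lambda>_. d)) $$ (P s, 0) = M $$ (i, s) * x $$ (P s, 0) * d"
            by (subst idx) (simp_all add: mult.assoc)
        qed
        thus "(x * mat 1 1 (\<lambda>_. d)) $$ (i, 0) = (\<Sum>s<\<rho>. M $$ (i, s) * (x * mat 1 1 (\<lambda>_. d)) $$ (P s, 0))"
          using Zx i unfolding Z_def by (subst idx) simp_all
      qed
    qed
    have "\<not> {..<n} \<subseteq> P ` {..<\<rho>}"
    proof
      assume "{..<n} \<subseteq> P ` {..<\<rho>}"
      hence "card {..<n} \<le> card (P ` {..<\<rho>})" by (intro card_mono) auto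
      also have "\<dots> = \<rho>" using inj by (simp add: card_image)
      finally show False using rn by simp
    qed
    then obtain i0' where i0': "i0' < n" "i0' \<notin> P ` {..<\<rho>}" by auto
    define e :: "'a mat" where "e = mat n 1 (\<lambda>(i, j). if i = i0' then 1 else 0)"
    have ec: "e \<in> carrier_mat n 1" unfolding e_def by simp
    have nZe: "\<not> Z e"
    proof
      assume "Z e"
      hence "e $$ (i0', 0) = (\<Sum>s<\<rho>. M $$ (i0', s) * e $$ (P s, 0))" using i0' unfolding Z_def by blast
      moreover have "(\<Sum>s<\<rho>. M $$ (i0', s) * e $$ (P s, 0)) = 0"
        using i0' Pn unfolding e_def by (intro sum.neutral) force
      ultimately show False using i0' unfolding e_def by simp
    qed
    obtain b where b: "b \<in> B" and nZ: "\<not> Z (b * u)"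
      using density_vec[OF dense sub n1 Z0 Zadd Zsc ec nZe uc u0] by blast
    have bc: "b \<in> carrier_mat n n" using b Bc by auto
    define w where "w = b * w0"
    have wV: "w \<in> V" using bs b w0 unfolding w_def B_submodule_def by blast
    have wc: "w \<in> carrier_mat n p" using wV Vc by auto
    have bu: "(b * u) $$ (i, 0) = w $$ (i, t0)" if "i < n" for i
    proof -
      have "(b * u) $$ (i, 0) = (\<Sum>l<n. b $$ (i, l) * u $$ (l, 0))"
        using that bc uc by (subst mult_idx[of _ n n _ 1]) auto
      also have "\<dots> = (\<Sum>l<n. b $$ (i, l) * w0 $$ (l, t0))" unfolding u_def by (intro sum.cong refl) auto
      also have "\<dots> = w $$ (i, t0)" unfolding w_def using that bc w0c t0 by (subst mult_idx[of _ n n _ p]) auto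
      finally show ?thesis .
    qed
    obtain i0 where i0: "i0 < n" and ne: "(b * u) $$ (i0, 0) \<noteq> (\<Sum>s<\<rho>. M $$ (i0, s) * (b * u) $$ (P s, 0))"
      using nZ unfolding Z_def by blast
    have ne': "w $$ (i0, t0) \<noteq> (\<Sum>s<\<rho>. M $$ (i0, s) * w $$ (P s, t0))"
    proof -
      have "(\<Sum>s<\<rho>. M $$ (i0, s) * (b * u) $$ (P s, 0)) = (\<Sum>s<\<rho>. M $$ (i0, s) * w $$ (P s, t0))"
        using Pn by (intro sum.cong refl) (simp add: bu)
      thus ?thesis using ne bu[OF i0] by simp
    qed
    have del: "w $$ (i0, t0) - (\<Sum>s<\<rho>. M $$ (i0, s) * w $$ (P s, t0)) \<noteq> 0" using ne' by simp
    have i0np: "i0 \<notin> P ` {..<\<rho>}"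
    proof
      assume "i0 \<in> P ` {..<\<rho>}"
      then obtain s' where s': "s' < \<rho>" "i0 = P s'" by auto
      have "(\<Sum>s<\<rho>. M $$ (i0, s) * w $$ (P s, t0)) = (\<Sum>s<\<rho>. (if s = s' then 1 else 0) * w $$ (P s, t0))"
        using s' piv rp by (intro sum.cong refl) auto
      also have "\<dots> = w $$ (i0, t0)" using s' by (simp add: sum_if_mult)
      finally show False using ne' by simp
    qed
    have Mt0: "\<forall>i<n. M $$ (i, t0) = 0" using hb t0 by auto
    obtain c where c: "c \<in> k" "c \<noteq> 0"
      and ri: "rows_indep (M + (c \<cdot>\<^sub>m 1\<^sub>m n) * w) (\<lambda>s. if s = \<rho> then i0 else P s) (Suc \<rho>)"
      using generic_c[OF cs inf Mc wc Pn i0 rp t0 piv Mt0 del] by blast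
    have "c \<cdot>\<^sub>m 1\<^sub>m n \<in> B" using sub c unfolding k_subalgebra_def by blast
    hence "(c \<cdot>\<^sub>m 1\<^sub>m n) * w \<in> V" using bs wV unfolding B_submodule_def by blast
    hence "M + (c \<cdot>\<^sub>m 1\<^sub>m n) * w \<in> V" using bs MV unfolding B_submodule_def by blast
    thus ?thesis using ri i0 i0np by blast
  qed
qed

lemma rank_step:
  fixes v :: "'a::division_ring mat" and k :: "'a set"
  assumes cs: "central_subfield k" and inf: "infinite k" and n1: "n \<ge> 1"
    and sub: "k_subalgebra n k B" and dense: "dense_in n B"
    and fs: "fullsub n p B V" and vV: "v \<in> V"
    and inj: "inj_on P {..<\<rho>}" and Pn: "\<forall>s<\<rho>. P s < n" and ri: "rows_indep v P \<rho>"
    and rn: "\<rho> < n" and rp: "\<rho> < p"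
  shows "\<exists>v'\<in>V. \<exists>P'. inj_on P' {..<Suc \<rho>} \<and> (\<forall>s<Suc \<rho>. P' s < n) \<and> rows_indep v' P' (Suc \<rho>)"
proof -
  have bs: "B_submodule n p B V" using fs unfolding fullsub_def by auto
  have Vc: "V \<subseteq> carrier_mat n p" using bs unfolding B_submodule_def by auto
  have vc: "v \<in> carrier_mat n p" using vV Vc by auto
  have Bc: "B \<subseteq> carrier_mat n n" using sub unfolding k_subalgebra_def by auto
  obtain T where T: "inv_mat p T" and piv: "\<forall>s<\<rho>. \<forall>t<p. (v * T) $$ (P s, t) = (if t = s then 1 else 0)"
    using elim_rows[OF vc Pn ri] by blast
  have Tc: "T \<in> carrier_mat p p" using T unfolding inv_mat_def by auto
  define V1 where "V1 = (\<lambda>X. X * T) ` V"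
  have fs1: "fullsub n p B V1" unfolding V1_def by (rule fullsub_inv[OF fs Bc T])
  have "v * T \<in> V1" unfolding V1_def using vV by blast
  then obtain N i0 where N: "N \<in> V1" and i0: "i0 < n" "i0 \<notin> P ` {..<\<rho>}"
    and riN: "rows_indep N (\<lambda>s. if s = \<rho> then i0 else P s) (Suc \<rho>)"
    using pivot_step[OF cs inf n1 sub dense fs1 _ inj Pn rn rp piv] by blast
  obtain v' where v': "v' \<in> V" "N = v' * T" using N unfolding V1_def by blast
  have v'c: "v' \<in> carrier_mat n p" using v' Vc by auto
  have P'n: "\<forall>s<Suc \<rho>. (if s = \<rho> then i0 else P s) < n" using Pn i0 by auto
  have "rows_indep v' (\<lambda>s. if s = \<rho> then i0 else P s) (Suc \<rho>)"
    by (rule rows_indep_mult_rev[OF v'c Tc P'n]) (use riN v' in simp)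
  moreover have "inj_on (\<lambda>s. if s = \<rho> then i0 else P s) {..<Suc \<rho>}"
  proof (rule inj_onI)
    fix s1 s2 assume s: "s1 \<in> {..<Suc \<rho>}" "s2 \<in> {..<Suc \<rho>}"
      and eq: "(if s1 = \<rho> then i0 else P s1) = (if s2 = \<rho> then i0 else P s2)"
    show "s1 = s2"
    proof (cases "s1 = \<rho>"; cases "s2 = \<rho>")
      assume "s1 \<noteq> \<rho>" "s2 \<noteq> \<rho>"
      thus ?thesis using eq s inj unfolding inj_on_def by auto
    qed (use eq s i0 in auto)
  qed
  ultimately show ?thesis using v' P'n by blast
qed

lemma rank_full:
  fixes k :: "'a::division_ring set"
  assumes cs: "central_subfield k" and inf: "infinite k" and n1: "n \<ge> 1"
    and sub: "k_subalgebra n k B" and dense: "dense_in n B"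
    and fs: "fullsub n p B V"
  shows "\<rho> \<le> n \<Longrightarrow> \<rho> \<le> p \<Longrightarrow> \<exists>v\<in>V. \<exists>P. inj_on P {..<\<rho>} \<and> (\<forall>s<\<rho>. P s < n) \<and> rows_indep v P \<rho>"
proof (induction \<rho>)
  case 0
  have "0\<^sub>m n p \<in> V" using fs unfolding fullsub_def B_submodule_def by auto
  thus ?case unfolding rows_indep_def by auto
next
  case (Suc \<rho>)
  then obtain v P where "v \<in> V" "inj_on P {..<\<rho>}" "\<forall>s<\<rho>. P s < n" "rows_indep v P \<rho>" by auto
  thus ?case using rank_step[OF cs inf n1 sub dense fs] Suc.prems by auto
qed

lemma sum_split_add:
  fixes f :: "nat \<Rightarrow> 'a::comm_monoid_add"
  shows "(\<Sum>l<n + q. f l) = (\<Sum>l<n. f l) + (\<Sum>l<q. f (n + l))"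
proof (induction q)
  case 0
  then show ?case by simp
next
  case (Suc q)
  have "(\<Sum>l<n + Suc q. f l) = (\<Sum>l<n + q. f l) + f (n + q)" by simp
  also have "\<dots> = (\<Sum>l<n. f l) + ((\<Sum>l<q. f (n + l)) + f (n + q))" using Suc by (simp add: add.assoc)
  also have "(\<Sum>l<q. f (n + l)) + f (n + q) = (\<Sum>l<Suc q. f (n + l))" by simp
  finally show ?case .
qed

lemma sum_split_shift:
  fixes f :: "nat \<Rightarrow> 'a::comm_monoid_add"
  assumes "n \<le> p"
  shows "(\<Sum>l<p. f l) = (\<Sum>l<n. f l) + (\<Sum>l<p - n. f (n + l))"
proof -
  have p: "p = n + (p - n)" using assms by simp
  have "(\<Sum>l<p. f l) = (\<Sum>l<n + (p - n). f l)" using p by simp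
  also have "\<dots> = (\<Sum>l<n. f l) + (\<Sum>l<p - n. f (n + l))" by (rule sum_split_add)
  finally show ?thesis .
qed

definition projm :: "nat \<Rightarrow> nat \<Rightarrow> 'a::ring_1 mat" where
  "projm n p = mat p (p - n) (\<lambda>(l, t). if l = n + t then 1 else 0)"

lemma projm_carrier[simp]: "projm n p \<in> carrier_mat p (p - n)"
  unfolding projm_def by simp

lemma proj_idx:
  fixes X :: "'a::ring_1 mat"
  assumes "X \<in> carrier_mat r p" "n \<le> p" "i < r" "t < p - n"
  shows "(X * projm n p) $$ (i, t) = X $$ (i, n + t)"
proof -
  have "(X * projm n p) $$ (i, t) = (\<Sum>l<p. X $$ (i, l) * (if l = n + t then 1 else 0))"
    using assms by (subst mult_idx[of _ r p _ "p - n"]) (auto simp: projm_def intro!: sum.cong)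
  also have "\<dots> = X $$ (i, n + t)" using assms by (subst sum_mult_if(2)) auto
  finally show ?thesis .
qed

definition BL :: "nat \<Rightarrow> nat \<Rightarrow> 'a::ring_1 mat \<Rightarrow> 'a mat \<Rightarrow> 'a mat" where
  "BL n p G T' = mat p p (\<lambda>(l, t). if l < n then (if t = l then 1 else 0)
      else if t < n then G $$ (l - n, t) else T' $$ (l - n, t - n))"

lemma BL_carrier[simp]: "BL n p G T' \<in> carrier_mat p p" unfolding BL_def by simp

lemma BL_idx: "l < p \<Longrightarrow> t < p \<Longrightarrow> BL n p G T' $$ (l, t) = (if l < n then (if t = l then 1 else 0)
      else if t < n then G $$ (l - n, t) else T' $$ (l - n, t - n))"
  unfolding BL_def by simp

lemma BL_mult:
  fixes X :: "'a::ring_1 mat"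
  assumes X: "X \<in> carrier_mat r p" and np: "n \<le> p" and G: "G \<in> carrier_mat (p - n) n"
    and T': "T' \<in> carrier_mat (p - n) (p - n)" and i: "i < r" and t: "t < p"
  shows "(X * BL n p G T') $$ (i, t) = (if t < n then X $$ (i, t) + ((X * projm n p) * G) $$ (i, t)
            else ((X * projm n p) * T') $$ (i, t - n))"
proof -
  have XP: "X * projm n p \<in> carrier_mat r (p - n)" using X by simp
  have "(X * BL n p G T') $$ (i, t) = (\<Sum>l<p. X $$ (i, l) * BL n p G T' $$ (l, t))"
    using X i t by (subst mult_idx[of _ r p _ p]) auto
  also have "\<dots> = (\<Sum>l<n. X $$ (i, l) * BL n p G T' $$ (l, t)) + (\<Sum>l<p - n. X $$ (i, n + l) * BL n p G T' $$ (n + l, t))"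
    by (rule sum_split_shift[OF np])
  also have "(\<Sum>l<n. X $$ (i, l) * BL n p G T' $$ (l, t)) = (if t < n then X $$ (i, t) else 0)"
  proof -
    have "(\<Sum>l<n. X $$ (i, l) * BL n p G T' $$ (l, t)) = (\<Sum>l<n. X $$ (i, l) * (if t = l then 1 else 0))"
      using np t by (intro sum.cong refl) (auto simp: BL_def)
    also have "\<dots> = (if t < n then X $$ (i, t) else 0)" by (subst sum_mult_if(1)) auto
    finally show ?thesis .
  qed
  also have "(\<Sum>l<p - n. X $$ (i, n + l) * BL n p G T' $$ (n + l, t))
      = (if t < n then ((X * projm n p) * G) $$ (i, t) else ((X * projm n p) * T') $$ (i, t - n))"
  proof (cases "t < n")
    case True
    have "((X * projm n p) * G) $$ (i, t) = (\<Sum>l<p - n. (X * projm n p) $$ (i, l) * G $$ (l, t))"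
      using XP G i True by (subst mult_idx[of _ r "p - n" _ n]) auto
    also have "\<dots> = (\<Sum>l<p - n. X $$ (i, n + l) * BL n p G T' $$ (n + l, t))"
      using X np i True t by (intro sum.cong refl) (auto simp: proj_idx BL_def)
    finally show ?thesis using True by simp
  next
    case False
    have "((X * projm n p) * T') $$ (i, t - n) = (\<Sum>l<p - n. (X * projm n p) $$ (i, l) * T' $$ (l, t - n))"
      using XP T' i False t by (subst mult_idx[of _ r "p - n" _ "p - n"]) auto
    also have "\<dots> = (\<Sum>l<p - n. X $$ (i, n + l) * BL n p G T' $$ (n + l, t))"
      using X np i False t by (intro sum.cong refl) (auto simp: proj_idx BL_def)
    finally show ?thesis using False by simp
  qed
  finally show ?thesis by simp
qed

lemma BL_proj:
  fixes G T' :: "'a::ring_1 mat"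
  assumes np: "n \<le> p" and l: "l < p" and m: "m < p - n"
  shows "(BL n p G T' * projm n p) $$ (l, m) = (if l < n then 0 else T' $$ (l - n, m))"
  using assms by (subst proj_idx[of _ p p]) (auto simp: BL_def)

lemma BL_proj_mult:
  fixes G T' :: "'a::ring_1 mat"
  assumes np: "n \<le> p" and T': "T' \<in> carrier_mat (p - n) (p - n)" and H: "H \<in> carrier_mat (p - n) c"
    and l: "l < p" and t: "t < c"
  shows "((BL n p G T' * projm n p) * H) $$ (l, t) = (if l < n then 0 else (T' * H) $$ (l - n, t))"
proof -
  have BP: "BL n p G T' * projm n p \<in> carrier_mat p (p - n)" by (rule mult_carrier_mat[OF BL_carrier projm_carrier])
  have "((BL n p G T' * projm n p) * H) $$ (l, t) = (\<Sum>m<p - n. (BL n p G T' * projm n p) $$ (l, m) * H $$ (m, t))"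
    by (rule mult_idx[OF BP H l t])
  also have "\<dots> = (\<Sum>m<p - n. (if l < n then 0 else T' $$ (l - n, m)) * H $$ (m, t))"
    using np l by (intro sum.cong refl) (simp add: BL_proj)
  also have "\<dots> = (if l < n then 0 else (T' * H) $$ (l - n, t))"
  proof (cases "l < n")
    case False
    hence ln: "l - n < p - n" using l by auto
    show ?thesis using False by (simp add: mult_idx[OF T' H ln t])
  qed simp
  finally show ?thesis .
qed

lemma BL_prod:
  fixes G T' G2 T2 :: "'a::ring_1 mat"
  assumes np: "n \<le> p" and G: "G \<in> carrier_mat (p - n) n" and T': "T' \<in> carrier_mat (p - n) (p - n)"
    and G2: "G2 \<in> carrier_mat (p - n) n" and T2: "T2 \<in> carrier_mat (p - n) (p - n)"
    and e1: "G + T' * G2 = 0\<^sub>m (p - n) n" and e2: "T' * T2 = 1\<^sub>m (p - n)"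
  shows "BL n p G T' * BL n p G2 T2 = 1\<^sub>m p"
proof (rule eq_matI)
  fix l t assume l: "l < dim_row (1\<^sub>m p :: 'a mat)" and t: "t < dim_col (1\<^sub>m p :: 'a mat)"
  hence lp: "l < p" and tp: "t < p" by auto
  have "(BL n p G T' * BL n p G2 T2) $$ (l, t) = (if t < n then BL n p G T' $$ (l, t) + ((BL n p G T' * projm n p) * G2) $$ (l, t)
            else ((BL n p G T' * projm n p) * T2) $$ (l, t - n))"
    by (rule BL_mult[OF BL_carrier np G2 T2 lp tp])
  also have "\<dots> = 1\<^sub>m p $$ (l, t)"
  proof (cases "t < n")
    case True
    have "G $$ (l - n, t) + (T' * G2) $$ (l - n, t) = 0" if "\<not> l < n"
    proof -
      have "(G + T' * G2) $$ (l - n, t) = 0" using e1 that lp True by simp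
      thus ?thesis using that lp True G T' G2 by simp
    qed
    note bpm = BL_proj_mult[OF np T' G2 lp True, of G]
    show ?thesis
    proof (cases "l < n")
      case True
      thus ?thesis using \<open>t < n\<close> lp tp by (simp add: bpm BL_idx)
    next
      case False
      thus ?thesis using \<open>t < n\<close> lp tp \<open>\<not> l < n \<Longrightarrow> G $$ (l - n, t) + (T' * G2) $$ (l - n, t) = 0\<close>
        by (simp add: bpm BL_idx)
    qed
  next
    case False
    have "(T' * T2) $$ (l - n, t - n) = (if l = t then 1 else 0)" if "\<not> l < n"
      using e2 that lp tp False by auto
    note bpm = BL_proj_mult[OF np T' T2 lp, of "t - n" G]
    show ?thesis
    proof (cases "l < n")
      case True
      thus ?thesis using \<open>\<not> t < n\<close> lp tp by (simp add: bpm)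
    next
      case lF: False
      have "t - n < p - n" using tp \<open>\<not> t < n\<close> by auto
      hence "((BL n p G T' * projm n p) * T2) $$ (l, t - n) = (T' * T2) $$ (l - n, t - n)" using bpm lF by simp
      also have "\<dots> = (if l = t then 1 else 0)" using \<open>\<not> l < n \<Longrightarrow> (T' * T2) $$ (l - n, t - n) = (if l = t then 1 else 0)\<close> lF .
      finally show ?thesis using \<open>\<not> t < n\<close> lp tp by simp
    qed
  qed
  finally show "(BL n p G T' * BL n p G2 T2) $$ (l, t) = 1\<^sub>m p $$ (l, t)" .
qed (auto simp: BL_def)

lemma BL_inv:
  fixes G T' :: "'a::ring_1 mat"
  assumes np: "n \<le> p" and G: "G \<in> carrier_mat (p - n) n" and T': "inv_mat (p - n) T'"
  shows "inv_mat p (BL n p G T')"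
proof -
  obtain Ti where Ti: "T' \<in> carrier_mat (p - n) (p - n)" "Ti \<in> carrier_mat (p - n) (p - n)"
    "T' * Ti = 1\<^sub>m (p - n)" "Ti * T' = 1\<^sub>m (p - n)" using T' unfolding inv_mat_def by blast
  define G2 where "G2 = - (Ti * G)"
  have G2c: "G2 \<in> carrier_mat (p - n) n" using Ti G unfolding G2_def by auto
  have e1: "G + T' * G2 = 0\<^sub>m (p - n) n"
  proof -
    have "T' * G2 = - (T' * (Ti * G))" unfolding G2_def using Ti G by (subst uminus_mult_right_mat) auto
    also have "T' * (Ti * G) = (T' * Ti) * G"
      by (rule assoc_mult_mat[symmetric, of _ "p - n" "p - n" _ "p - n" _ n]) (use Ti G in auto)
    also have "(T' * Ti) * G = G" using Ti G by simp
    finally show ?thesis using G by (intro eq_matI) auto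
  qed
  have e1': "G2 + Ti * G = 0\<^sub>m (p - n) n" unfolding G2_def using Ti G by (intro eq_matI) auto
  have 1: "BL n p G T' * BL n p G2 Ti = 1\<^sub>m p" by (rule BL_prod[OF np G Ti(1) G2c Ti(2) e1 Ti(3)])
  have 2: "BL n p G2 Ti * BL n p G T' = 1\<^sub>m p" by (rule BL_prod[OF np G2c Ti(2) G Ti(1) e1' Ti(4)])
  show ?thesis unfolding inv_mat_def using 1 2 by (auto intro!: bexI[of _ "BL n p G2 Ti"])
qed

lemma fullsub_proj:
  fixes V :: "'a::division_ring mat set"
  assumes fs: "fullsub n p B V" and Bc: "B \<subseteq> carrier_mat n n" and np: "n \<le> p"
  shows "fullsub n (p - n) B ((\<lambda>X. X * projm n p) ` V)"
proof -
  have bs: "B_submodule n p B V" and sp: "A_span n p V = carrier_mat n p" using fs unfolding fullsub_def by auto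
  have Vc: "V \<subseteq> carrier_mat n p" using bs unfolding B_submodule_def by auto
  have bs': "B_submodule n (p - n) B ((\<lambda>X. X * projm n p) ` V)" by (rule bsub_image[OF bs Bc projm_carrier])
  have V'c: "(\<lambda>X. X * projm n p) ` V \<subseteq> carrier_mat n (p - n)" using bs' unfolding B_submodule_def by auto
  have "A_span n (p - n) ((\<lambda>X. X * projm n p) ` V) = carrier_mat n (p - n)"
  proof
    show "A_span n (p - n) ((\<lambda>X. X * projm n p) ` V) \<subseteq> carrier_mat n (p - n)" using aspan_carrier[OF V'c] by blast
    show "carrier_mat n (p - n) \<subseteq> A_span n (p - n) ((\<lambda>X. X * projm n p) ` V)"
    proof
      fix Y' :: "'a mat" assume Y': "Y' \<in> carrier_mat n (p - n)"
      define Y where "Y = mat n p (\<lambda>(i, l). if l < n then 0 else Y' $$ (i, l - n))"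
      have Yc: "Y \<in> carrier_mat n p" unfolding Y_def by simp
      hence "Y \<in> A_span n p V" using sp by simp
      hence "Y * projm n p \<in> A_span n (p - n) ((\<lambda>X. X * projm n p) ` V)" by (rule aspan_image[OF Vc projm_carrier])
      moreover have "Y * projm n p = Y'"
      proof (rule eq_matI)
        fix i t assume "i < dim_row Y'" "t < dim_col Y'"
        hence it: "i < n" "t < p - n" using Y' by auto
        show "(Y * projm n p) $$ (i, t) = Y' $$ (i, t)"
          using it np by (subst proj_idx[OF Yc np]) (auto simp: Y_def)
      qed (use Y' in \<open>auto simp: projm_def Y_def\<close>)
      ultimately show "Y' \<in> A_span n (p - n) ((\<lambda>X. X * projm n p) ` V)" by simp
    qed
  qed
  thus ?thesis using bs' unfolding fullsub_def by simp
qed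

lemma base_case:
  fixes k :: "'a::division_ring set"
  assumes cs: "central_subfield k" and inf: "infinite k" and n1: "n \<ge> 1"
    and sub: "k_subalgebra n k B" and dense: "dense_in n B"
    and fs: "fullsub n p B V" and pn: "p < n"
  shows "\<exists>T. inv_mat p T \<and> (\<exists>Y\<in>(\<lambda>X. X * T) ` V. cols_indep (tail_block 0 p Y) {0..<p})"
proof -
  have Vc: "V \<subseteq> carrier_mat n p" using fs unfolding fullsub_def B_submodule_def by auto
  obtain v P where v: "v \<in> V" and Pn: "\<forall>s<p. P s < n" and ri: "rows_indep v P p"
    using rank_full[OF cs inf n1 sub dense fs, of p] pn by auto
  have vc: "v \<in> carrier_mat n p" using v Vc by auto
  obtain T where T: "inv_mat p T" and piv: "\<forall>s<p. \<forall>t<p. (v * T) $$ (P s, t) = (if t = s then 1 else 0)"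
    using elim_rows[OF vc Pn ri] by blast
  have Tc: "T \<in> carrier_mat p p" using T unfolding inv_mat_def by auto
  define Y where "Y = v * T"
  have Yc: "Y \<in> carrier_mat n p" using vc Tc Y_def by auto
  have "cols_indep (tail_block 0 p Y) {0..<p}" unfolding cols_indep_def
  proof (intro allI impI ballI)
    fix c :: "nat \<Rightarrow> 'a" and j
    assume h: "\<forall>i<dim_row (tail_block 0 p Y). (\<Sum>j\<in>{0..<p}. tail_block 0 p Y $$ (i, j) * c j) = 0"
      and j: "j \<in> {0..<p}"
    have "(\<Sum>j'\<in>{0..<p}. tail_block 0 p Y $$ (P j, j') * c j') = 0"
      using h Pn j Yc by (simp add: tail_block_def)
    moreover have "(\<Sum>j'\<in>{0..<p}. tail_block 0 p Y $$ (P j, j') * c j') = (\<Sum>j'\<in>{0..<p}. (if j' = j then 1 else 0) * c j')"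
      using Pn j Yc piv by (intro sum.cong refl) (auto simp: tail_block_def Y_def)
    moreover have "\<dots> = c j" using j by (subst sum_if_mult) auto
    ultimately show "c j = 0" by simp
  qed
  thus ?thesis using T v Y_def by blast
qed

lemma first_block:
  fixes k :: "'a::division_ring set"
  assumes cs: "central_subfield k" and inf: "infinite k" and n1: "n \<ge> 1"
    and sub: "k_subalgebra n k B" and dense: "dense_in n B"
    and fs: "fullsub n p B V" and np: "n \<le> p"
  shows "\<exists>T v. inv_mat p T \<and> v \<in> V \<and> v * T = E_block n p 0"
proof -
  have Vc: "V \<subseteq> carrier_mat n p" using fs unfolding fullsub_def B_submodule_def by auto
  obtain v P where v: "v \<in> V" and inj: "inj_on P {..<n}" and Pn: "\<forall>s<n. P s < n" and ri: "rows_indep v P n"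
    using rank_full[OF cs inf n1 sub dense fs, of n] np by auto
  have vc: "v \<in> carrier_mat n p" using v Vc by auto
  have Pim: "P ` {..<n} = {..<n}" by (rule endo_inj_surj) (use Pn inj in auto)
  have ri': "rows_indep v (\<lambda>s. s) n" unfolding rows_indep_def
  proof (rule allI, rule impI)
    fix \<alpha> assume h: "\<forall>t<dim_col v. (\<Sum>s<n. \<alpha> s * v $$ (s, t)) = 0"
    have "\<forall>t<dim_col v. (\<Sum>s<n. (\<alpha> \<circ> P) s * v $$ (P s, t)) = 0"
    proof (intro allI impI)
      fix t assume "t < dim_col v"
      have "(\<Sum>s<n. (\<alpha> \<circ> P) s * v $$ (P s, t)) = (\<Sum>i\<in>P ` {..<n}. \<alpha> i * v $$ (i, t))"
        using sum.reindex[OF inj, of "\<lambda>i. \<alpha> i * v $$ (i, t)"] by (simp add: comp_def)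
      also have "\<dots> = 0" unfolding Pim using h \<open>t < dim_col v\<close> by simp
      finally show "(\<Sum>s<n. (\<alpha> \<circ> P) s * v $$ (P s, t)) = 0" .
    qed
    hence z: "\<forall>s<n. \<alpha> (P s) = 0" using ri unfolding rows_indep_def by (metis comp_apply)
    show "\<forall>s<n. \<alpha> s = 0"
    proof (intro allI impI)
      fix i assume "i < n"
      then obtain s where "s < n" "i = P s" using Pim by (metis imageE lessThan_iff)
      thus "\<alpha> i = 0" using z by simp
    qed
  qed
  obtain T where T: "inv_mat p T" and piv: "\<forall>s<n. \<forall>t<p. (v * T) $$ (s, t) = (if t = s then 1 else 0)"
    using elim_rows[OF vc _ ri'] by auto
  have Tc: "T \<in> carrier_mat p p" using T unfolding inv_mat_def by auto
  have "v * T = E_block n p 0"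
    by (rule eq_matI) (use piv vc Tc in \<open>auto simp: E_block_def\<close>)
  thus ?thesis using T v by blast
qed

lemma E0_proj:
  assumes np: "n \<le> p"
  shows "(E_block n p 0 :: 'a::division_ring mat) * projm n p = 0\<^sub>m n (p - n)"
proof (rule eq_matI)
  fix i t assume "i < dim_row (0\<^sub>m n (p - n) :: 'a mat)" "t < dim_col (0\<^sub>m n (p - n) :: 'a mat)"
  hence it: "i < n" "t < p - n" by auto
  show "(E_block n p 0 * projm n p) $$ (i, t) = (0\<^sub>m n (p - n) :: 'a mat) $$ (i, t)"
    using it np by (subst proj_idx[of _ n p]) (auto simp: E_block_def)
qed (auto simp: E_block_def projm_def)

lemma main_ind:
  fixes k :: "'a::division_ring set" and B :: "'a mat set"
  assumes cs: "central_subfield k" and inf: "infinite k" and n1: "n \<ge> 1"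
    and sub: "k_subalgebra n k B" and dense: "dense_in n B"
  shows "fullsub n p B V \<Longrightarrow> \<exists>T. inv_mat p T \<and> (\<forall>j < p div n. E_block n p j \<in> (\<lambda>X. X * T) ` V) \<and>
           (\<exists>Y\<in>(\<lambda>X. X * T) ` V. cols_indep (tail_block (p div n) (p mod n) Y) {0..<p mod n})"
proof (induction p arbitrary: V rule: less_induct)
  case (less p)
  have Bc: "B \<subseteq> carrier_mat n n" using sub unfolding k_subalgebra_def by auto
  show ?case
  proof (cases "p < n")
    case True
    obtain T where "inv_mat p T" "\<exists>Y\<in>(\<lambda>X. X * T) ` V. cols_indep (tail_block 0 p Y) {0..<p}"
      using base_case[OF cs inf n1 sub dense less.prems True] by blast
    moreover have "p div n = 0" "p mod n = p" using True by auto
    ultimately show ?thesis by auto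
  next
    case False
    hence np: "n \<le> p" by simp
    have Vc: "V \<subseteq> carrier_mat n p" using less.prems unfolding fullsub_def B_submodule_def by auto
    obtain T1 v where T1: "inv_mat p T1" and vV: "v \<in> V" and vT1: "v * T1 = E_block n p 0"
      using first_block[OF cs inf n1 sub dense less.prems np] by blast
    have T1c: "T1 \<in> carrier_mat p p" using T1 unfolding inv_mat_def by auto
    define V1 where "V1 = (\<lambda>X. X * T1) ` V"
    have fs1: "fullsub n p B V1" unfolding V1_def by (rule fullsub_inv[OF less.prems Bc T1])
    have V1c: "V1 \<subseteq> carrier_mat n p" using fs1 unfolding fullsub_def B_submodule_def by auto
    define Pr where "Pr = (projm n p :: 'a mat)"
    have Prc: "Pr \<in> carrier_mat p (p - n)" unfolding Pr_def by simp
    define V' where "V' = (\<lambda>X. X * Pr) ` V1"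
    have fs': "fullsub n (p - n) B V'" unfolding V'_def Pr_def by (rule fullsub_proj[OF fs1 Bc np])
    have lt: "p - n < p" using n1 np by auto
    obtain T' where T': "inv_mat (p - n) T'"
      and Ej: "\<forall>j < (p - n) div n. E_block n (p - n) j \<in> (\<lambda>X. X * T') ` V'"
      and Yex: "\<exists>Y\<in>(\<lambda>X. X * T') ` V'. cols_indep (tail_block ((p - n) div n) ((p - n) mod n) Y) {0..<(p - n) mod n}"
      using less.IH[OF lt fs'] by blast
    have T'c: "T' \<in> carrier_mat (p - n) (p - n)" using T' unfolding inv_mat_def by auto
    define q' where "q' = (p - n) div n"
    define r where "r = (p - n) mod n"
    have pdiv: "p div n = Suc q'" unfolding q'_def using n1 np by (simp add: le_div_geq)
    have pmod: "p mod n = r" unfolding r_def using np by (simp add: le_mod_geq)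
    have pdec: "p - n = q' * n + r" unfolding q'_def r_def by simp
    have exj: "\<exists>x. x \<in> V1 \<and> (x * Pr) * T' = E_block n (p - n) j" if j: "j < q'" for j
    proof -
      have "E_block n (p - n) j \<in> (\<lambda>X. X * T') ` V'" using Ej j unfolding q'_def by simp
      then obtain y where y: "y \<in> V'" "E_block n (p - n) j = y * T'" by (rule imageE)
      obtain x where x: "x \<in> V1" "y = x * Pr" using y(1) unfolding V'_def by (rule imageE)
      show ?thesis using x y by (intro exI[of _ x]) simp
    qed
    define xf where "xf j = (SOME x. x \<in> V1 \<and> (x * Pr) * T' = E_block n (p - n) j)" for j
    have xf: "xf j \<in> V1 \<and> (xf j * Pr) * T' = E_block n (p - n) j" if "j < q'" for j
      unfolding xf_def by (rule someI_ex[OF exj[OF that]])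
    define S0 :: "'a mat" where "S0 = mat (p - n) n (\<lambda>(l, c). if l < q' * n then - (xf (l div n) $$ (l mod n, c)) else 0)"
    have S0c: "S0 \<in> carrier_mat (p - n) n" unfolding S0_def by simp
    define G where "G = T' * S0"
    have Gc: "G \<in> carrier_mat (p - n) n" using T'c S0c G_def by auto
    define T2 where "T2 = BL n p G T'"
    have T2: "inv_mat p T2" unfolding T2_def by (rule BL_inv[OF np Gc T'])
    have T2c: "T2 \<in> carrier_mat p p" unfolding T2_def by simp
    have Tinv: "inv_mat p (T1 * T2)" by (rule inv_mat_mult[OF T1 T2])
    have imgT: "X * T1 * T2 \<in> (\<lambda>X. X * (T1 * T2)) ` V" if "X \<in> V" for X
    proof -
      have "X * T1 * T2 = X * (T1 * T2)" by (rule assoc_mult_mat[of _ n p _ p _ p]) (use that Vc T1c T2c in auto)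
      thus ?thesis using that by blast
    qed
    have E0c: "E_block n p 0 \<in> carrier_mat n p" by (simp add: E_block_def)
    have E0: "E_block n p 0 * T2 = E_block n p 0"
    proof (rule eq_matI)
      fix i t assume "i < dim_row (E_block n p 0 :: 'a mat)" "t < dim_col (E_block n p 0 :: 'a mat)"
      hence it: "i < n" "t < p" by (auto simp: E_block_def)
      have ep: "E_block n p 0 * Pr = 0\<^sub>m n (p - n)" unfolding Pr_def by (rule E0_proj[OF np])
      have bm: "(E_block n p 0 * T2) $$ (i, t) = (if t < n then E_block n p 0 $$ (i, t) + ((E_block n p 0 * Pr) * G) $$ (i, t)
            else ((E_block n p 0 * Pr) * T') $$ (i, t - n))"
        unfolding T2_def Pr_def by (rule BL_mult[OF E0c np Gc T'c it])
      have z: "E_block n p 0 $$ (i, t) = (0::'a)" if "\<not> t < n" using it that by (simp add: E_block_def)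
      show "(E_block n p 0 * T2) $$ (i, t) = E_block n p 0 $$ (i, t)"
        using bm[unfolded ep] Gc T'c it z by (cases "t < n") auto
    qed (auto simp: T2_def BL_def E_block_def)
    have Eall: "\<forall>j < p div n. E_block n p j \<in> (\<lambda>X. X * (T1 * T2)) ` V"
    proof (intro allI impI)
      fix j assume j: "j < p div n"
      show "E_block n p j \<in> (\<lambda>X. X * (T1 * T2)) ` V"
      proof (cases j)
        case 0
        have "v * T1 * T2 = E_block n p j" using vT1 E0 0 by simp
        thus ?thesis using imgT[OF vV] by simp
      next
        case (Suc j')
        hence j': "j' < q'" using j pdiv by simp
        have x: "xf j' \<in> V1" "(xf j' * Pr) * T' = E_block n (p - n) j'" using xf[OF j'] by auto
        obtain vj where vj: "vj \<in> V" "xf j' = vj * T1" using x(1) unfolding V1_def by blast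
        have xc: "xf j' \<in> carrier_mat n p" using x(1) V1c by auto
        have xPc: "xf j' * Pr \<in> carrier_mat n (p - n)" using xc Prc by auto
        have jb: "j' * n + i < q' * n" if "i < n" for i
        proof -
          have "j' * n + i < j' * n + n" using that by simp
          also have "\<dots> = Suc j' * n" by simp
          also have "\<dots> \<le> q' * n" using j' by (intro mult_le_mono1) simp
          finally show ?thesis .
        qed
        have "xf j' * T2 = E_block n p (Suc j')"
        proof (rule eq_matI)
          fix i t assume "i < dim_row (E_block n p (Suc j') :: 'a mat)" "t < dim_col (E_block n p (Suc j') :: 'a mat)"
          hence it: "i < n" "t < p" by (auto simp: E_block_def)
          have bm: "(xf j' * T2) $$ (i, t) = (if t < n then xf j' $$ (i, t) + ((xf j' * Pr) * G) $$ (i, t)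
            else ((xf j' * Pr) * T') $$ (i, t - n))"
            unfolding T2_def Pr_def by (rule BL_mult[OF xc np Gc T'c it])
          show "(xf j' * T2) $$ (i, t) = E_block n p (Suc j') $$ (i, t)"
          proof (cases "t < n")
            case True
            have "(xf j' * Pr) * G = ((xf j' * Pr) * T') * S0" unfolding G_def
              using xPc T'c S0c by (simp add: assoc_mult_mat[of _ n "p - n" _ "p - n" _ n])
            also have "\<dots> = E_block n (p - n) j' * S0" using x by simp
            finally have e1: "(xf j' * Pr) * G = E_block n (p - n) j' * S0" .
            have Ejc: "E_block n (p - n) j' \<in> carrier_mat n (p - n)" by (simp add: E_block_def)
            have "(E_block n (p - n) j' * S0) $$ (i, t) = (\<Sum>l<p - n. E_block n (p - n) j' $$ (i, l) * S0 $$ (l, t))"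
              by (rule mult_idx[OF Ejc S0c it(1) True])
            also have "\<dots> = (\<Sum>l<p - n. (if l = j' * n + i then 1 else 0) * S0 $$ (l, t))"
              using it by (intro sum.cong refl) (auto simp: E_block_def)
            also have "\<dots> = S0 $$ (j' * n + i, t)"
              using jb[OF it(1)] pdec by (subst sum_if_mult) auto
            also have "\<dots> = - (xf j' $$ (i, t))"
            proof -
              have "(j' * n + i) div n = j'" "(j' * n + i) mod n = i" using it(1) by auto
              thus ?thesis using jb[OF it(1)] pdec True unfolding S0_def by auto
            qed
            finally have "((xf j' * Pr) * G) $$ (i, t) = - (xf j' $$ (i, t))" using e1 by simp
            moreover have "E_block n p (Suc j') $$ (i, t) = 0" using it True by (auto simp: E_block_def)
            ultimately show ?thesis using bm True by simp
          next
            case False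
            have "((xf j' * Pr) * T') $$ (i, t - n) = E_block n (p - n) j' $$ (i, t - n)" using x by simp
            also have "\<dots> = (if t - n = j' * n + i then 1 else 0)" using it False by (auto simp: E_block_def)
            also have "\<dots> = E_block n p (Suc j') $$ (i, t)" using it False by (auto simp: E_block_def)
            finally show ?thesis using bm False by simp
          qed
        qed (use xc in \<open>auto simp: T2_def E_block_def BL_def\<close>)
        hence "vj * T1 * T2 = E_block n p j" using vj Suc by simp
        thus ?thesis using imgT[OF vj(1)] by simp
      qed
    qed
    obtain Y' where Y'img: "Y' \<in> (\<lambda>X. X * T') ` V'" and Y'ind: "cols_indep (tail_block q' r Y') {0..<r}"
      using Yex unfolding q'_def r_def by blast
    obtain y where y: "y \<in> V1" "Y' = (y * Pr) * T'" using Y'img unfolding V'_def by blast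
    obtain vy where vy: "vy \<in> V" "y = vy * T1" using y(1) unfolding V1_def by blast
    have yc: "y \<in> carrier_mat n p" using y V1c by auto
    have Y'c: "Y' \<in> carrier_mat n (p - n)" using y yc Prc T'c by auto
    define Y where "Y = y * T2"
    have Yc: "Y \<in> carrier_mat n p" using yc T2c Y_def by auto
    have "tail_block (Suc q') r Y = tail_block q' r Y'"
    proof (rule eq_matI)
      fix i j assume "i < dim_row (tail_block q' r Y')" "j < dim_col (tail_block q' r Y')"
      hence ij: "i < n" "j < r" using Y'c by (auto simp: tail_block_def)
      have tp: "Suc q' * n + j < p" using pdec ij np by simp
      have "Y $$ (i, Suc q' * n + j) = ((y * Pr) * T') $$ (i, Suc q' * n + j - n)"
        unfolding Y_def T2_def Pr_def using ij tp
        by (subst BL_mult[OF yc np Gc T'c ij(1) tp]) simp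
      also have "Suc q' * n + j - n = q' * n + j" by simp
      finally show "tail_block (Suc q') r Y $$ (i, j) = tail_block q' r Y' $$ (i, j)"
        using ij Yc Y'c y yc by (simp add: tail_block_def)
    qed (use Yc Y'c in \<open>auto simp: tail_block_def\<close>)
    hence "cols_indep (tail_block (p div n) (p mod n) Y) {0..<p mod n}"
      using Y'ind pdiv pmod by simp
    moreover have "Y \<in> (\<lambda>X. X * (T1 * T2)) ` V" using imgT[OF vy(1)] vy Y_def by simp
    ultimately show ?thesis using Tinv Eall by blast
  qed
qed

theorem lemma1p2:
  fixes k :: "'a::division_ring set"
    and n m :: nat
    and B V :: "'a mat set"
  assumes "central_subfield k" and "infinite k"
    and "n \<ge> 1"
    and "k_subalgebra n k B" and "dense_in n B"
    and "m \<ge> 1"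
    and "B_submodule n m B V"
    and "A_span n m V = carrier_mat n m"
  shows "\<exists>\<sigma>. A_module_aut n m \<sigma> \<and>
           (\<forall>j < m div n. E_block n m j \<in> \<sigma> ` V) \<and>
           (\<exists>Y \<in> \<sigma> ` V. mat_rank (tail_block (m div n) (m mod n) Y) = m mod n)"
proof -
  have fs: "fullsub n m B V" using assms(7,8) unfolding fullsub_def by simp
  obtain T where T: "inv_mat m T" and E: "\<forall>j < m div n. E_block n m j \<in> (\<lambda>X. X * T) ` V"
    and Y: "\<exists>Y\<in>(\<lambda>X. X * T) ` V. cols_indep (tail_block (m div n) (m mod n) Y) {0..<m mod n}"
    using main_ind[OF assms(1-5) fs] by blast
  obtain T' where TT: "T \<in> carrier_mat m m" "T' \<in> carrier_mat m m" "T * T' = 1\<^sub>m m" "T' * T = 1\<^sub>m m"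
    using T unfolding inv_mat_def by blast
  have aut: "A_module_aut n m (\<lambda>X. X * T)"
    unfolding A_module_aut_def
  proof (intro conjI ballI)
    show "bij_betw (\<lambda>X. X * T) (carrier_mat n m) (carrier_mat n m)"
    proof (rule bij_betw_byWitness[where f' = "\<lambda>X. X * T'"])
      show "\<forall>a\<in>carrier_mat n m. a * T * T' = a" using TT by (auto simp: assoc_mult_mat[of _ n m _ m _ m])
      show "\<forall>a\<in>carrier_mat n m. a * T' * T = a" using TT by (auto simp: assoc_mult_mat[of _ n m _ m _ m])
    qed (use TT in auto)
  next
    fix X Y :: "'a mat" assume "X \<in> carrier_mat n m" "Y \<in> carrier_mat n m"
    thus "(X + Y) * T = X * T + Y * T" using TT by (simp add: add_mult_distrib_mat)
  next
    fix a X :: "'a mat" assume "a \<in> carrier_mat n n" "X \<in> carrier_mat n m"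
    thus "a * X * T = a * (X * T)" using TT by (simp add: assoc_mult_mat[of _ n n _ m _ m])
  qed
  obtain Y where Yi: "Y \<in> (\<lambda>X. X * T) ` V" and ind: "cols_indep (tail_block (m div n) (m mod n) Y) {0..<m mod n}"
    using Y by blast
  have "mat_rank (tail_block (m div n) (m mod n) Y) = m mod n"
  proof -
    let ?M = "tail_block (m div n) (m mod n) Y"
    let ?S = "{card S |S. S \<subseteq> {0..<dim_col ?M} \<and> cols_indep ?M S}"
    have dc: "dim_col ?M = m mod n" by (simp add: tail_block_def)
    have fin: "finite ?S"
    proof -
      have "?S \<subseteq> card ` Pow {0..<dim_col ?M}" by auto
      thus ?thesis by (rule finite_subset) simp
    qed
    have mem: "m mod n \<in> ?S" using ind dc by force
    have le: "\<forall>x\<in>?S. x \<le> m mod n"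
    proof
      fix x assume "x \<in> ?S"
      then obtain S where "x = card S" "S \<subseteq> {0..<dim_col ?M}" by blast
      thus "x \<le> m mod n" using dc card_mono[of "{0..<dim_col ?M}" S] by simp
    qed
    show ?thesis unfolding mat_rank_def by (rule Max_eqI[OF fin]) (use le mem in auto)
  qed
  thus ?thesis using aut E Yi by blast
qed

end
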